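(* Let $F$ be a finite field of odd characteristic in which $-1$ is not a square, let $z,z'\in F$ with $z\neq z'$, and let $g_z,g_{z'}:F^3\to\mathbb{C}$ be functions supported on the planes $\{x_3=z\}$ and $\{x_3=z'\}$ respectively, each $\sim1$ on its support, with $G_z=\{\underline{x}\in F^2:g_z(\underline{x},z)\ne0\}$ and $G_{z'}=\{\underline{x}\in F^2:g_{z'}(\underline{x},z')\ne0\}$. Then $$\big\|(g_z*K)\,(g_{z'}*K)\big\|_{L^2(F^3)}^2 \lesssim |F|^{-1}|G_z|\,|G_{z'}| + |F|^{-2}\,\mathcal{B}(G_z,G_{z'}),$$ where $\mathcal{B}(A,B):=\min\{\mathcal{T}(A,B),\ |F|\,(\mathcal{R}(A)\mathcal{R}(B))^{1/2}\}$.
   Context: $e:(F,+)\to\mathbb{C}^\times$ is a fixed nontrivial additive character; $x\cdot y=\sum_i x_iy_i$; points of $F^3$ are $x=(\underline{x},x_3)$. $P=\{(\underline{x},\underline{x}\cdot\underline{x}):\underline{x}\in F^2\}$. $F^3$ carries counting measure, $(h_1*h_2)(x)=\sum_y h_1(y)h_2(x-y)$. $(d\sigma)^{\vee}(x)=|F|^{-2}\sum_{\xi\in P}e(x\cdot\xi)$, $\delta$ the indicator of $0$, $K:=(d\sigma)^{\vee}-\delta$. "$h\sim1$ on its support" means $\tfrac12\le|h|\le2$ wherever $h\ne0$. For $x_0,x_1,x_2\in F^2$, $(x_0,x_1,x_2)$ is a corner if $(x_1-x_0)\cdot(x_2-x_1)=0$; $(x_0,x_1,x_2,x_3)\in(F^2)^4$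 is a rectangle if $(x_i,x_{i+1},x_{i+2})$ is a corner for each $i\in\{0,1,2,3\}$, indices mod 4; $\mathcal{R}(A)$ is the number of rectangles in $A^4$. A quadruple $(x_1,x_2,x_3,x_4)$ in $F^2$ is a trapezoid if $x_1-x_2=\lambda(x_3-x_4)$ for some $\lambda\in F$; $\mathcal{T}(A,B)$ is the number of trapezoids with $x_1,x_2\in A$, $x_3,x_4\in B$. $X\lesssim Y$ means $X\le CY$ with $C$ absolute. *)

theory Defs
  imports "HOL-Algebra.Ring" "HOL-Algebra.Ring_Divisibility" "HOL-Analysis.Analysis"
begin

(* Finite fields are HOL-Algebra records R :: nat ring (every finite field is isomorphic
   to one whose carrier is a set of naturals), so that the absolute constant can be
   quantified before all fields. *)

type_synonym pt2 = "nat \<times> nat"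
type_synonym pt3 = "(nat \<times> nat) \<times> nat"

definition ring_char :: "nat ring \<Rightarrow> nat" where
  "ring_char R = (LEAST n. n > 0 \<and> [n] \<cdot>\<^bsub>R\<^esub> \<one>\<^bsub>R\<^esub> = \<zero>\<^bsub>R\<^esub>)"

definition pts2 :: "nat ring \<Rightarrow> pt2 set" where
  "pts2 R = carrier R \<times> carrier R"

definition pts3 :: "nat ring \<Rightarrow> pt3 set" where
  "pts3 R = (carrier R \<times> carrier R) \<times> carrier R"

definition add2 :: "nat ring \<Rightarrow> pt2 \<Rightarrow> pt2 \<Rightarrow> pt2" where
  "add2 R x y = (fst x \<oplus>\<^bsub>R\<^esub> fst y, snd x \<oplus>\<^bsub>R\<^esub> snd y)"

definition sub2 :: "nat ring \<Rightarrow> pt2 \<Rightarrow> pt2 \<Rightarrow> pt2" where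
  "sub2 R x y = (fst x \<ominus>\<^bsub>R\<^esub> fst y, snd x \<ominus>\<^bsub>R\<^esub> snd y)"

definition smult2 :: "nat ring \<Rightarrow> nat \<Rightarrow> pt2 \<Rightarrow> pt2" where
  "smult2 R c x = (c \<otimes>\<^bsub>R\<^esub> fst x, c \<otimes>\<^bsub>R\<^esub> snd x)"

definition dot2 :: "nat ring \<Rightarrow> pt2 \<Rightarrow> pt2 \<Rightarrow> nat" where
  "dot2 R x y = (fst x \<otimes>\<^bsub>R\<^esub> fst y) \<oplus>\<^bsub>R\<^esub> (snd x \<otimes>\<^bsub>R\<^esub> snd y)"

definition sub3 :: "nat ring \<Rightarrow> pt3 \<Rightarrow> pt3 \<Rightarrow> pt3" where
  "sub3 R x y = (sub2 R (fst x) (fst y), snd x \<ominus>\<^bsub>R\<^esub> snd y)"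

definition dot3 :: "nat ring \<Rightarrow> pt3 \<Rightarrow> pt3 \<Rightarrow> nat" where
  "dot3 R x y = dot2 R (fst x) (fst y) \<oplus>\<^bsub>R\<^esub> (snd x \<otimes>\<^bsub>R\<^esub> snd y)"

definition additive_character :: "nat ring \<Rightarrow> (nat \<Rightarrow> complex) \<Rightarrow> bool" where
  "additive_character R e \<longleftrightarrow>
     (\<forall>a\<in>carrier R. e a \<noteq> 0) \<and>
     (\<forall>a\<in>carrier R. \<forall>b\<in>carrier R. e (a \<oplus>\<^bsub>R\<^esub> b) = e a * e b)"

definition nontrivial_character :: "nat ring \<Rightarrow> (nat \<Rightarrow> complex) \<Rightarrow> bool" where
  "nontrivial_character R e \<longleftrightarrow> additive_character R e \<and> (\<exists>a\<in>carrier R. e a \<noteq> 1)"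

definition parab :: "nat ring \<Rightarrow> pt3 set" where
  "parab R = {(u, dot2 R u u) | u. u \<in> pts2 R}"

definition dsigma_check :: "nat ring \<Rightarrow> (nat \<Rightarrow> complex) \<Rightarrow> pt3 \<Rightarrow> complex" where
  "dsigma_check R e x = (\<Sum>\<xi>\<in>parab R. e (dot3 R x \<xi>)) / (of_nat (card (carrier R)))^2"

definition delta0 :: "nat ring \<Rightarrow> pt3 \<Rightarrow> complex" where
  "delta0 R x = (if x = ((\<zero>\<^bsub>R\<^esub>, \<zero>\<^bsub>R\<^esub>), \<zero>\<^bsub>R\<^esub>) then 1 else 0)"

definition kernK :: "nat ring \<Rightarrow> (nat \<Rightarrow> complex) \<Rightarrow> pt3 \<Rightarrow> complex" where
  "kernK R e x = dsigma_check R e x - delta0 R x"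

definition conv3 :: "nat ring \<Rightarrow> (pt3 \<Rightarrow> complex) \<Rightarrow> (pt3 \<Rightarrow> complex) \<Rightarrow> pt3 \<Rightarrow> complex" where
  "conv3 R h1 h2 x = (\<Sum>y\<in>pts3 R. h1 y * h2 (sub3 R x y))"

definition L2sq :: "nat ring \<Rightarrow> (pt3 \<Rightarrow> complex) \<Rightarrow> real" where
  "L2sq R h = (\<Sum>x\<in>pts3 R. (cmod (h x))^2)"

definition is_corner :: "nat ring \<Rightarrow> pt2 \<Rightarrow> pt2 \<Rightarrow> pt2 \<Rightarrow> bool" where
  "is_corner R x0 x1 x2 \<longleftrightarrow> dot2 R (sub2 R x1 x0) (sub2 R x2 x1) = \<zero>\<^bsub>R\<^esub>"

definition is_rectangle :: "nat ring \<Rightarrow> pt2 \<Rightarrow> pt2 \<Rightarrow> pt2 \<Rightarrow> pt2 \<Rightarrow> bool" where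
  "is_rectangle R x0 x1 x2 x3 \<longleftrightarrow>
     is_corner R x0 x1 x2 \<and> is_corner R x1 x2 x3 \<and> is_corner R x2 x3 x0 \<and> is_corner R x3 x0 x1"

definition num_rect :: "nat ring \<Rightarrow> pt2 set \<Rightarrow> nat" where
  "num_rect R A = card {(x0, x1, x2, x3). x0 \<in> A \<and> x1 \<in> A \<and> x2 \<in> A \<and> x3 \<in> A \<and>
                                          is_rectangle R x0 x1 x2 x3}"

definition is_trapezoid :: "nat ring \<Rightarrow> pt2 \<Rightarrow> pt2 \<Rightarrow> pt2 \<Rightarrow> pt2 \<Rightarrow> bool" where
  "is_trapezoid R x1 x2 x3 x4 \<longleftrightarrow>
     (\<exists>c\<in>carrier R. sub2 R x1 x2 = smult2 R c (sub2 R x3 x4))"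

definition num_trap :: "nat ring \<Rightarrow> pt2 set \<Rightarrow> pt2 set \<Rightarrow> nat" where
  "num_trap R A B = card {(x1, x2, x3, x4). x1 \<in> A \<and> x2 \<in> A \<and> x3 \<in> B \<and> x4 \<in> B \<and>
                                          is_trapezoid R x1 x2 x3 x4}"

definition Bquant :: "nat ring \<Rightarrow> pt2 set \<Rightarrow> pt2 set \<Rightarrow> real" where
  "Bquant R A B = min (real (num_trap R A B))
                      (real (card (carrier R)) * sqrt (real (num_rect R A) * real (num_rect R B)))"

definition sim_one_on_support :: "(pt3 \<Rightarrow> complex) \<Rightarrow> bool" where
  "sim_one_on_support h \<longleftrightarrow> (\<forall>x. h x \<noteq> 0 \<longrightarrow> 1/2 \<le> cmod (h x) \<and> cmod (h x) \<le> 2)"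

definition supported_on_plane :: "nat ring \<Rightarrow> (pt3 \<Rightarrow> complex) \<Rightarrow> nat \<Rightarrow> bool" where
  "supported_on_plane R h z \<longleftrightarrow> (\<forall>x. h x \<noteq> 0 \<longrightarrow> x \<in> pts3 R \<and> snd x = z)"

definition slice_set :: "nat ring \<Rightarrow> (pt3 \<Rightarrow> complex) \<Rightarrow> nat \<Rightarrow> pt2 set" where
  "slice_set R h z = {u \<in> pts2 R. h (u, z) \<noteq> 0}"

end

theory Submission
  imports Defs
begin

locale FF = field R for R :: "nat ring" (structure) +
  fixes e :: "nat \<Rightarrow> complex"
  assumes fin: "finite (carrier R)"
  and chr: "additive_character R e"
  and ntriv: "\<exists>a\<in>carrier R. e a \<noteq> 1"
  and two_nz: "\<one> \<oplus> \<one> \<noteq> \<zero>"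
begin

abbreviation F where "F \<equiv> carrier R"
definition q :: real where "q = real (card (carrier R))"

lemma q_pos: "q > 0"
  unfolding q_def using fin by (simp add: card_gt_0_iff) (use zero_closed in blast)

lemma e_add: "a \<in> F \<Longrightarrow> b \<in> F \<Longrightarrow> e (a \<oplus> b) = e a * e b"
  using chr unfolding additive_character_def by blast

lemma e_nz: "a \<in> F \<Longrightarrow> e a \<noteq> 0"
  using chr unfolding additive_character_def by blast

lemma e_zero: "e \<zero> = 1"
proof -
  have "e \<zero> = e \<zero> * e \<zero>" using e_add[of \<zero> \<zero>] by simp
  thus ?thesis using e_nz[of \<zero>] by simp
qed

lemma e_pow: "a \<in> F \<Longrightarrow> e (add_pow R (n) a) = e a ^ n"
proof (induction n)
  case 0 then show ?case by (simp add: e_zero)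
next
  case (Suc n)
  have "add_pow R (Suc n) a = (add_pow R (n) a) \<oplus> a"
    by (rule add.nat_pow_Suc)
  moreover have "add_pow R (n) a \<in> F" using Suc.prems add.nat_pow_closed[of a n] by simp
  ultimately show ?case using Suc by (simp add: e_add)
qed

lemma e_norm: "a \<in> F \<Longrightarrow> cmod (e a) = 1"
proof -
  assume a: "a \<in> F"
  have cl: "\<And>n::nat. add_pow R n a \<in> F" using a add.nat_pow_closed by simp
  have "\<not> inj_on (\<lambda>n::nat. add_pow R (n) a) {..card F}"
  proof
    assume inj: "inj_on (\<lambda>n::nat. add_pow R (n) a) {..card F}"
    have "(\<lambda>n::nat. add_pow R (n) a) ` {..card F} \<subseteq> F" using cl by blast
    hence "card ((\<lambda>n::nat. add_pow R (n) a) ` {..card F}) \<le> card F" using fin card_mono by blast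
    thus False using card_image[OF inj] by simp
  qed
  then obtain m n :: nat where mn: "m \<noteq> n" "add_pow R (m) a = add_pow R (n) a"
    unfolding inj_on_def by blast
  have key: "\<And>m n::nat. m < n \<Longrightarrow> add_pow R (m) a = add_pow R (n) a \<Longrightarrow> add_pow R ((n - m)::nat) a = \<zero>"
  proof -
    fix m n :: nat assume T: "m < n" and eq: "add_pow R (m) a = add_pow R (n) a"
    have "add_pow R m a \<oplus> add_pow R (n - m) a = add_pow R (m + (n - m)) a" by (rule add.nat_pow_mult[OF a])
    also have "m + (n - m) = n" using T by simp
    finally have "add_pow R m a \<oplus> add_pow R (n - m) a = add_pow R m a" using eq by simp
    thus "add_pow R (n - m) a = \<zero>" using add.l_cancel_one[OF cl cl] by blast
  qed
  have "\<exists>k::nat. k > 0 \<and> add_pow R (k) a = \<zero>"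
  proof (cases "m < n")
    case True
    thus ?thesis using key[OF True mn(2)] by (intro exI[of _ "n-m"]) simp
  next
    case False
    hence T: "n < m" using mn(1) by simp
    thus ?thesis using key[OF T mn(2)[symmetric]] by (intro exI[of _ "m-n"]) simp
  qed
  then obtain k :: nat where k: "k > 0" "add_pow R (k) a = \<zero>" by blast
  have "e a ^ k = 1" using e_pow[OF a, of k] k(2) e_zero by simp
  thus ?thesis using k(1) power_eq_1_iff[of "e a" k] by simp
qed

lemma e_neg: "a \<in> F \<Longrightarrow> e (\<ominus> a) = cnj (e a)"
proof -
  assume a: "a \<in> F"
  have "e (\<ominus> a) * e a = 1" using e_add[of "\<ominus> a" a] a e_zero by (simp add: l_neg)
  moreover have "cnj (e a) * e a = 1" using e_norm[OF a]
    using complex_norm_square[of "e a"] by (simp add: mult.commute)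
  ultimately show ?thesis using e_nz[OF a] by (metis mult_cancel_right)
qed

lemma e_minus: "a \<in> F \<Longrightarrow> b \<in> F \<Longrightarrow> e (a \<ominus> b) = e a * cnj (e b)"
  by (simp add: minus_eq e_add e_neg)

lemma inv_facts: "a \<in> F \<Longrightarrow> a \<noteq> \<zero> \<Longrightarrow> inv a \<in> F \<and> inv a \<otimes> a = \<one> \<and> a \<otimes> inv a = \<one>"
  using field_Units by (auto intro: Units_inv_closed Units_l_inv Units_r_inv)

lemma q_of_nat: "complex_of_real q = of_nat (card F)"
  unfolding q_def by simp

lemma sum_e_all: "(\<Sum>y\<in>F. e y) = 0"
proof -
  obtain b where b: "b \<in> F" "e b \<noteq> 1" using ntriv by blast
  have "(\<Sum>y\<in>F. e y) = (\<Sum>y\<in>F. e (b \<oplus> y))"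
    by (rule sum.reindex_bij_witness[of F "\<lambda>y. b \<oplus> y" "\<lambda>y. \<ominus> b \<oplus> y"])
       (use b in \<open>auto simp: a_assoc[symmetric] r_neg l_neg\<close>)
  also have "\<dots> = e b * (\<Sum>y\<in>F. e y)" by (simp add: sum_distrib_left e_add b)
  finally have "(1 - e b) * (\<Sum>y\<in>F. e y) = 0" by (simp add: algebra_simps)
  thus ?thesis using b by simp
qed

lemma orth1: "c \<in> F \<Longrightarrow> (\<Sum>x\<in>F. e (c \<otimes> x)) = (if c = \<zero> then complex_of_real q else 0)"
proof -
  assume c: "c \<in> F"
  show ?thesis
  proof (cases "c = \<zero>")
    case True thus ?thesis by (simp add: e_zero q_of_nat)
  next
    case False
    note I = inv_facts[OF c False]
    have "(\<Sum>x\<in>F. e (c \<otimes> x)) = (\<Sum>y\<in>F. e y)"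
      by (rule sum.reindex_bij_witness[of F "\<lambda>y. inv c \<otimes> y" "\<lambda>x. c \<otimes> x"])
         (use c I in \<open>auto simp: m_assoc[symmetric]\<close>)
    thus ?thesis using False sum_e_all by simp
  qed
qed

lemma lin_sum: "L \<in> F \<Longrightarrow> C \<in> F \<Longrightarrow>
   (\<Sum>x\<in>F. e (x \<otimes> L \<oplus> C)) = (if L = \<zero> then complex_of_real q * e C else 0)"
proof -
  assume L: "L \<in> F" and C: "C \<in> F"
  have "(\<Sum>x\<in>F. e (x \<otimes> L \<oplus> C)) = (\<Sum>x\<in>F. e (L \<otimes> x)) * e C"
    by (simp add: sum_distrib_right e_add L C m_comm)
  thus ?thesis using orth1[OF L] by simp
qed

lemma sum_pts2: fixes f g :: "nat \<Rightarrow> complex" shows "(\<Sum>x\<in>pts2 R. f (fst x) * g (snd x)) = (\<Sum>a\<in>F. f a) * (\<Sum>b\<in>F. g b)"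
proof -
  have "(\<Sum>a\<in>F. f a) * (\<Sum>b\<in>F. g b) = (\<Sum>a\<in>F. \<Sum>b\<in>F. f a * g b)" by (rule sum_product)
  also have "\<dots> = (\<Sum>(a,b)\<in>F\<times>F. f a * g b)" by (rule sum.cartesian_product)
  finally show ?thesis unfolding pts2_def by (simp add: split_def)
qed

definition two where "two = \<one> \<oplus> \<one>"
definition four where "four = two \<otimes> two"
definition rho where "rho t = inv (four \<otimes> t)"
definition psi where "psi t b = e (\<ominus> (rho t \<otimes> b \<otimes> b))"
definition G where "G t = (\<Sum>a\<in>F. e (t \<otimes> a \<otimes> a))"
definition gs where "gs b t = (\<Sum>a\<in>F. e (b \<otimes> a \<oplus> t \<otimes> a \<otimes> a))"

lemma two_closed[simp]: "two \<in> F" and four_closed[simp]: "four \<in> F"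
  unfolding two_def four_def by auto

lemma two_ne[simp]: "two \<noteq> \<zero>" using two_nz two_def by simp

lemma four_ne[simp]: "four \<noteq> \<zero>"
  unfolding four_def using two_ne integral_iff[of two two] by simp

lemma prod_ne: "a \<in> F \<Longrightarrow> b \<in> F \<Longrightarrow> a \<noteq> \<zero> \<Longrightarrow> b \<noteq> \<zero> \<Longrightarrow> a \<otimes> b \<noteq> \<zero>"
  using integral_iff by simp

lemma rho_facts: "t \<in> F \<Longrightarrow> t \<noteq> \<zero> \<Longrightarrow> rho t \<in> F \<and> rho t \<noteq> \<zero> \<and> four \<otimes> t \<otimes> rho t = \<one>"
proof -
  assume t: "t \<in> F" "t \<noteq> \<zero>"
  have ne: "four \<otimes> t \<noteq> \<zero>" using prod_ne[of four t] t by simp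
  have X: "four \<otimes> t \<in> F" using t by simp
  note I = inv_facts[OF X ne]
  have "inv (four \<otimes> t) \<noteq> \<zero>"
  proof
    assume "inv (four \<otimes> t) = \<zero>"
    hence "(four \<otimes> t) \<otimes> inv (four \<otimes> t) = \<zero>" using X by simp
    thus False using I by simp
  qed
  thus ?thesis unfolding rho_def using I by simp
qed

lemma gauss_abs: "t \<in> F \<Longrightarrow> t \<noteq> \<zero> \<Longrightarrow> G t * cnj (G t) = complex_of_real q"
proof -
  assume t: "t \<in> F" "t \<noteq> \<zero>"
  have "G t * cnj (G t) = (\<Sum>a\<in>F. e (t \<otimes> a \<otimes> a)) * (\<Sum>b\<in>F. cnj (e (t \<otimes> b \<otimes> b)))"
    unfolding G_def by simp
  also have "\<dots> = (\<Sum>a\<in>F. \<Sum>b\<in>F. e (t \<otimes> a \<otimes> a) * cnj (e (t \<otimes> b \<otimes> b)))"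
    by (rule sum_product)
  also have "\<dots> = (\<Sum>a\<in>F. \<Sum>b\<in>F. e (t \<otimes> a \<otimes> a \<ominus> t \<otimes> b \<otimes> b))"
    by (intro sum.cong refl) (simp add: e_minus t)
  also have "\<dots> = (\<Sum>b\<in>F. \<Sum>a\<in>F. e (t \<otimes> a \<otimes> a \<ominus> t \<otimes> b \<otimes> b))"
    by (rule sum.swap)
  also have "\<dots> = (\<Sum>b\<in>F. \<Sum>d\<in>F. e (b \<otimes> (two \<otimes> t \<otimes> d) \<oplus> t \<otimes> d \<otimes> d))"
  proof (rule sum.cong[OF refl])
    fix b assume b: "b \<in> F"
    show "(\<Sum>a\<in>F. e (t \<otimes> a \<otimes> a \<ominus> t \<otimes> b \<otimes> b)) = (\<Sum>d\<in>F. e (b \<otimes> (two \<otimes> t \<otimes> d) \<oplus> t \<otimes> d \<otimes> d))"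
    proof (rule sum.reindex_bij_witness[of F "\<lambda>d. b \<oplus> d" "\<lambda>a. a \<ominus> b"])
      fix a assume a: "a \<in> F"
      show "b \<oplus> (a \<ominus> b) = a" using a b by algebra
      show "a \<ominus> b \<in> F" using a b by simp
      have "b \<otimes> (two \<otimes> t \<otimes> (a \<ominus> b)) \<oplus> t \<otimes> (a \<ominus> b) \<otimes> (a \<ominus> b) = t \<otimes> a \<otimes> a \<ominus> t \<otimes> b \<otimes> b"
        using a b t(1) unfolding two_def by algebra
      thus "e (b \<otimes> (two \<otimes> t \<otimes> (a \<ominus> b)) \<oplus> t \<otimes> (a \<ominus> b) \<otimes> (a \<ominus> b)) = e (t \<otimes> a \<otimes> a \<ominus> t \<otimes> b \<otimes> b)" by simp
    next
      fix d assume d: "d \<in> F"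
      show "b \<oplus> d \<ominus> b = d" using b d by algebra
      show "b \<oplus> d \<in> F" using b d by simp
    qed
  qed
  also have "\<dots> = (\<Sum>d\<in>F. \<Sum>b\<in>F. e (b \<otimes> (two \<otimes> t \<otimes> d) \<oplus> t \<otimes> d \<otimes> d))"
    by (rule sum.swap)
  also have "\<dots> = (\<Sum>d\<in>F. if d = \<zero> then complex_of_real q else 0)"
  proof (rule sum.cong[OF refl])
    fix d assume d: "d \<in> F"
    have "two \<otimes> t \<otimes> d = \<zero> \<longleftrightarrow> d = \<zero>"
      using d t prod_ne[of "two \<otimes> t" d] prod_ne[of two t] by auto
    thus "(\<Sum>b\<in>F. e (b \<otimes> (two \<otimes> t \<otimes> d) \<oplus> t \<otimes> d \<otimes> d)) = (if d = \<zero> then complex_of_real q else 0)"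
      using lin_sum[of "two \<otimes> t \<otimes> d" "t \<otimes> d \<otimes> d"] d t by (simp add: e_zero)
  qed
  also have "\<dots> = complex_of_real q" using sum.delta[OF fin, of \<zero> "\<lambda>_. complex_of_real q"] by simp
  finally show ?thesis .
qed

lemma G_norm: "t \<in> F \<Longrightarrow> t \<noteq> \<zero> \<Longrightarrow> cmod (G t) ^ 2 = q"
proof -
  assume t: "t \<in> F" "t \<noteq> \<zero>"
  have "complex_of_real (cmod (G t) ^ 2) = complex_of_real q"
    using gauss_abs[OF t] complex_norm_square[of "G t"] by simp
  thus ?thesis by (simp only: of_real_eq_iff)
qed

lemma gs_closed: "t \<in> F \<Longrightarrow> t \<noteq> \<zero> \<Longrightarrow> b \<in> F \<Longrightarrow> gs b t = psi t b * G t"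
proof -
  assume t: "t \<in> F" "t \<noteq> \<zero>" and b: "b \<in> F"
  note rf = rho_facts[OF t]
  define r where "r = rho t"
  have r: "r \<in> F" "four \<otimes> t \<otimes> r = \<one>" using rf r_def by auto
  define d where "d = two \<otimes> r \<otimes> b"
  have d: "d \<in> F" using r b unfolding d_def by simp
  have "gs b t = (\<Sum>a\<in>F. e (t \<otimes> a \<otimes> a \<oplus> \<ominus> (r \<otimes> b \<otimes> b)))"
    unfolding gs_def
  proof (rule sum.reindex_bij_witness[of F "\<lambda>a. a \<ominus> d" "\<lambda>a. a \<oplus> d"])
    fix a assume a: "a \<in> F"
    show "a \<oplus> d \<ominus> d = a" using a d by algebra
    show "a \<oplus> d \<in> F" using a d by simp
    have s1: "t \<otimes> (a \<oplus> d) \<otimes> (a \<oplus> d) = t \<otimes> a \<otimes> a \<oplus> two \<otimes> t \<otimes> a \<otimes> d \<oplus> t \<otimes> d \<otimes> d"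
      using a d t(1) unfolding two_def by algebra
    have s2: "two \<otimes> t \<otimes> a \<otimes> d = (four \<otimes> t \<otimes> r) \<otimes> (a \<otimes> b)"
      using a b t(1) r(1) two_closed unfolding d_def four_def by algebra
    have s3: "t \<otimes> d \<otimes> d = (four \<otimes> t \<otimes> r) \<otimes> (r \<otimes> b \<otimes> b)"
      using a b t(1) r(1) two_closed unfolding d_def four_def by algebra
    have "t \<otimes> (a \<oplus> d) \<otimes> (a \<oplus> d) = t \<otimes> a \<otimes> a \<oplus> a \<otimes> b \<oplus> r \<otimes> b \<otimes> b"
      unfolding s1 s2 s3 r(2) using a b r(1) by simp
    moreover have "b \<otimes> a \<oplus> t \<otimes> a \<otimes> a = (t \<otimes> a \<otimes> a \<oplus> a \<otimes> b \<oplus> r \<otimes> b \<otimes> b) \<oplus> \<ominus> (r \<otimes> b \<otimes> b)"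
      using a b t(1) r(1) by algebra
    ultimately have "b \<otimes> a \<oplus> t \<otimes> a \<otimes> a = t \<otimes> (a \<oplus> d) \<otimes> (a \<oplus> d) \<oplus> \<ominus> (r \<otimes> b \<otimes> b)"
      by simp
    thus "e (t \<otimes> (a \<oplus> d) \<otimes> (a \<oplus> d) \<oplus> \<ominus> (r \<otimes> b \<otimes> b)) = e (b \<otimes> a \<oplus> t \<otimes> a \<otimes> a)" by simp
  next
    fix a assume a: "a \<in> F"
    show "a \<ominus> d \<oplus> d = a" using a d by algebra
    show "a \<ominus> d \<in> F" using a d by simp
  qed
  also have "\<dots> = G t * psi t b"
    unfolding G_def psi_def r_def[symmetric] using r b t by (simp add: e_add sum_distrib_right)
  finally show ?thesis by simp
qed


lemma pts2_fin: "finite (pts2 R)" unfolding pts2_def using fin by simp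
lemma pts2_mem: "u \<in> pts2 R \<Longrightarrow> fst u \<in> F \<and> snd u \<in> F" unfolding pts2_def by auto
lemma pts2_iff: "u \<in> pts2 R \<longleftrightarrow> fst u \<in> F \<and> snd u \<in> F" unfolding pts2_def by (cases u) auto
lemma pts3_iff: "x \<in> pts3 R \<longleftrightarrow> fst x \<in> pts2 R \<and> snd x \<in> F" unfolding pts3_def pts2_def by (cases x) auto
lemma pts3_eq: "pts3 R = pts2 R \<times> F" unfolding pts3_def pts2_def by simp

lemma parab_eq: "parab R = (\<lambda>u. (u, dot2 R u u)) ` pts2 R"
  unfolding parab_def by auto

lemma gs_zero: "b \<in> F \<Longrightarrow> gs b \<zero> = (if b = \<zero> then complex_of_real q else 0)"
proof -
  assume b: "b \<in> F"
  have "gs b \<zero> = (\<Sum>a\<in>F. e (b \<otimes> a))" unfolding gs_def by (intro sum.cong refl) (simp add: b)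
  thus ?thesis using orth1[OF b] by simp
qed

lemma dsig: "y \<in> pts2 R \<Longrightarrow> t \<in> F \<Longrightarrow>
   dsigma_check R e (y, t) = gs (fst y) t * gs (snd y) t / (complex_of_real q)^2"
proof -
  assume y: "y \<in> pts2 R" and t: "t \<in> F"
  have y12: "fst y \<in> F" "snd y \<in> F" using pts2_mem[OF y] by auto
  have inj: "inj_on (\<lambda>u. (u, dot2 R u u)) (pts2 R)" by (rule inj_onI) simp
  have "(\<Sum>\<xi>\<in>parab R. e (dot3 R (y, t) \<xi>)) = (\<Sum>u\<in>pts2 R. e (dot3 R (y, t) (u, dot2 R u u)))"
    unfolding parab_eq by (simp add: sum.reindex[OF inj])
  also have "\<dots> = (\<Sum>u\<in>pts2 R. e (fst y \<otimes> fst u \<oplus> t \<otimes> fst u \<otimes> fst u) * e (snd y \<otimes> snd u \<oplus> t \<otimes> snd u \<otimes> snd u))"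
  proof (rule sum.cong[OF refl])
    fix u assume u: "u \<in> pts2 R"
    have u12: "fst u \<in> F" "snd u \<in> F" using pts2_mem[OF u] by auto
    have "dot3 R (y, t) (u, dot2 R u u) = (fst y \<otimes> fst u \<oplus> t \<otimes> fst u \<otimes> fst u) \<oplus> (snd y \<otimes> snd u \<oplus> t \<otimes> snd u \<otimes> snd u)"
      unfolding dot3_def dot2_def using y12 u12 t by simp algebra
    thus "e (dot3 R (y, t) (u, dot2 R u u)) = e (fst y \<otimes> fst u \<oplus> t \<otimes> fst u \<otimes> fst u) * e (snd y \<otimes> snd u \<oplus> t \<otimes> snd u \<otimes> snd u)"
      using y12 u12 t by (simp add: e_add)
  qed
  also have "\<dots> = gs (fst y) t * gs (snd y) t"
    unfolding gs_def by (rule sum_pts2)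
  finally show ?thesis unfolding dsigma_check_def q_of_nat by simp
qed

definition cK where "cK t = (G t)^2 / (complex_of_real q)^2"
definition Psi where "Psi t v = psi t (fst v) * psi t (snd v)"

lemma kern_nz: "y \<in> pts2 R \<Longrightarrow> t \<in> F \<Longrightarrow> t \<noteq> \<zero> \<Longrightarrow> kernK R e (y, t) = cK t * Psi t y"
proof -
  assume y: "y \<in> pts2 R" and t: "t \<in> F" "t \<noteq> \<zero>"
  have y12: "fst y \<in> F" "snd y \<in> F" using pts2_mem[OF y] by auto
  have "delta0 R (y, t) = 0" unfolding delta0_def using t by auto
  thus ?thesis unfolding kernK_def dsig[OF y t(1)] cK_def Psi_def
    using gs_closed[OF t y12(1)] gs_closed[OF t y12(2)] by (simp add: power2_eq_square)
qed

lemma kern_z: "y \<in> pts2 R \<Longrightarrow> kernK R e (y, \<zero>) = 0"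
proof -
  assume y: "y \<in> pts2 R"
  have y12: "fst y \<in> F" "snd y \<in> F" using pts2_mem[OF y] by auto
  have qn: "complex_of_real q \<noteq> 0" using q_pos by simp
  show ?thesis unfolding kernK_def dsig[OF y zero_closed] gs_zero[OF y12(1)] gs_zero[OF y12(2)] delta0_def
    using qn by (cases y) (auto simp: power2_eq_square)
qed

lemma diff0: "a \<in> F \<Longrightarrow> b \<in> F \<Longrightarrow> (a \<ominus> b = \<zero>) = (a = b)"
proof
  assume ab: "a \<in> F" "b \<in> F" "a \<ominus> b = \<zero>"
  have "a = (a \<ominus> b) \<oplus> b" using ab(1,2) by algebra
  thus "a = b" using ab by simp
next
  assume ab: "a \<in> F" "b \<in> F" "a = b"
  thus "a \<ominus> b = \<zero>" by (simp add: r_neg minus_eq)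
qed

lemma sub2_mem: "x \<in> pts2 R \<Longrightarrow> u \<in> pts2 R \<Longrightarrow> sub2 R x u \<in> pts2 R"
  unfolding pts2_iff sub2_def by simp

lemma conv_formula:
  assumes sup: "supported_on_plane R g z" and z: "z \<in> F" and x: "x \<in> pts2 R" and w: "w \<in> F"
  shows "conv3 R g (kernK R e) (x, w) =
     (if w = z then 0 else cK (w \<ominus> z) * (\<Sum>u\<in>slice_set R g z. g (u, z) * Psi (w \<ominus> z) (sub2 R x u)))"
proof -
  let ?S = "slice_set R g z"
  have fin3: "finite (pts3 R)" unfolding pts3_eq using pts2_fin fin by simp
  have sub: "(\<lambda>u. (u, z)) ` ?S \<subseteq> pts3 R" unfolding slice_set_def using z by (auto simp: pts3_iff)
  have "conv3 R g (kernK R e) (x, w) = (\<Sum>y\<in>(\<lambda>u. (u, z)) ` ?S. g y * kernK R e (sub3 R (x, w) y))"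
    unfolding conv3_def
  proof (rule sum.mono_neutral_right[OF fin3 sub], rule ballI)
    fix y assume y: "y \<in> pts3 R - (\<lambda>u. (u, z)) ` ?S"
    have "g y = 0"
    proof (rule ccontr)
      assume "g y \<noteq> 0"
      hence "y \<in> pts3 R \<and> snd y = z" using sup unfolding supported_on_plane_def by blast
      hence "y = (fst y, z)" "fst y \<in> ?S" using \<open>g y \<noteq> 0\<close> unfolding slice_set_def pts3_iff
        by (cases y, auto)+
      thus False using y by (metis image_eqI DiffD2)
    qed
    thus "g y * kernK R e (sub3 R (x, w) y) = 0" by simp
  qed
  also have "\<dots> = (\<Sum>u\<in>?S. g (u, z) * kernK R e (sub2 R x u, w \<ominus> z))"
    by (subst sum.reindex) (auto intro: inj_onI simp: sub3_def)
  also have "\<dots> = (if w = z then 0 else cK (w \<ominus> z) * (\<Sum>u\<in>?S. g (u, z) * Psi (w \<ominus> z) (sub2 R x u)))"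
  proof (cases "w = z")
    case True
    have "\<And>u. u \<in> ?S \<Longrightarrow> kernK R e (sub2 R x u, w \<ominus> z) = 0"
      using True kern_z sub2_mem x z unfolding slice_set_def by (simp add: r_neg minus_eq)
    thus ?thesis using True by simp
  next
    case False
    have wz: "w \<ominus> z \<in> F" "w \<ominus> z \<noteq> \<zero>" using w z False diff0 by auto
    have "\<And>u. u \<in> ?S \<Longrightarrow> kernK R e (sub2 R x u, w \<ominus> z) = cK (w \<ominus> z) * Psi (w \<ominus> z) (sub2 R x u)"
      using kern_nz[OF _ wz] sub2_mem x unfolding slice_set_def by simp
    thus ?thesis using False by (simp add: sum_distrib_left mult.left_commute)
  qed
  finally show ?thesis .
qed


lemma prod2: fixes f :: "'a \<Rightarrow> complex" and g :: "'b \<Rightarrow> complex"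
  shows "(\<Sum>x\<in>A. f x) * (\<Sum>y\<in>B. g y) = (\<Sum>p\<in>A \<times> B. f (fst p) * g (snd p))"
proof -
  have "(\<Sum>x\<in>A. f x) * (\<Sum>y\<in>B. g y) = (\<Sum>x\<in>A. \<Sum>y\<in>B. f x * g y)" by (rule sum_product)
  also have "\<dots> = (\<Sum>(x,y)\<in>A \<times> B. f x * g y)" by (rule sum.cartesian_product)
  finally show ?thesis by (simp add: split_def)
qed

definition q1 :: "pt2 \<times> pt2 \<times> pt2 \<times> pt2 \<Rightarrow> pt2" where "q1 Q = fst Q"
definition q2 :: "pt2 \<times> pt2 \<times> pt2 \<times> pt2 \<Rightarrow> pt2" where "q2 Q = fst (snd Q)"
definition q3 :: "pt2 \<times> pt2 \<times> pt2 \<times> pt2 \<Rightarrow> pt2" where "q3 Q = fst (snd (snd Q))"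
definition q4 :: "pt2 \<times> pt2 \<times> pt2 \<times> pt2 \<Rightarrow> pt2" where "q4 Q = snd (snd (snd Q))"

definition W :: "(pt2 \<Rightarrow> complex) \<Rightarrow> (pt2 \<Rightarrow> complex) \<Rightarrow> pt2 \<times> pt2 \<times> pt2 \<times> pt2 \<Rightarrow> complex" where
  "W a b Q = a (q1 Q) * cnj (a (q2 Q)) * b (q3 Q) * cnj (b (q4 Q))"

lemma quad_expand:
  fixes a b p1 p2 p3 p4 :: "pt2 \<Rightarrow> complex"
  shows "(\<Sum>u\<in>A. a u * p1 u) * cnj (\<Sum>u\<in>A. a u * p2 u) * ((\<Sum>v\<in>B. b v * p3 v) * cnj (\<Sum>v\<in>B. b v * p4 v))
    = (\<Sum>Q\<in>A \<times> A \<times> B \<times> B. W a b Q * (p1 (q1 Q) * cnj (p2 (q2 Q)) * p3 (q3 Q) * cnj (p4 (q4 Q))))"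
proof -
  have "(\<Sum>u\<in>A. a u * p1 u) * cnj (\<Sum>u\<in>A. a u * p2 u) * ((\<Sum>v\<in>B. b v * p3 v) * cnj (\<Sum>v\<in>B. b v * p4 v))
     = (\<Sum>u\<in>A. a u * p1 u) * ((\<Sum>u\<in>A. cnj (a u * p2 u)) * ((\<Sum>v\<in>B. b v * p3 v) * (\<Sum>v\<in>B. cnj (b v * p4 v))))"
    by (simp add: mult.assoc)
  also have "\<dots> = (\<Sum>Q\<in>A \<times> A \<times> B \<times> B. (a (fst Q) * p1 (fst Q)) * (cnj (a (fst (snd Q)) * p2 (fst (snd Q))) *
       ((b (fst (snd (snd Q))) * p3 (fst (snd (snd Q)))) * cnj (b (snd (snd (snd Q))) * p4 (snd (snd (snd Q)))))))"
    unfolding prod2 by simp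
  also have "\<dots> = (\<Sum>Q\<in>A \<times> A \<times> B \<times> B. W a b Q * (p1 (q1 Q) * cnj (p2 (q2 Q)) * p3 (q3 Q) * cnj (p4 (q4 Q))))"
    unfolding W_def q1_def q2_def q3_def q4_def by (simp add: mult_ac)
  finally show ?thesis .
qed

lemma sq_diff: "r \<in> F \<Longrightarrow> x \<in> F \<Longrightarrow> u \<in> F \<Longrightarrow> u' \<in> F \<Longrightarrow>
  \<ominus> (r \<otimes> (x \<ominus> u) \<otimes> (x \<ominus> u)) \<oplus> r \<otimes> (x \<ominus> u') \<otimes> (x \<ominus> u') = x \<otimes> (two \<otimes> r \<otimes> (u \<ominus> u')) \<oplus> r \<otimes> (u' \<otimes> u' \<ominus> u \<otimes> u)"
  unfolding two_def by algebra

lemma comb: "x \<in> F \<Longrightarrow> A \<in> F \<Longrightarrow> B \<in> F \<Longrightarrow> C \<in> F \<Longrightarrow> D \<in> F \<Longrightarrow>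
  (x \<otimes> A \<oplus> C) \<oplus> (x \<otimes> B \<oplus> D) = x \<otimes> (A \<oplus> B) \<oplus> (C \<oplus> D)"
  by algebra

lemma comb2: "a \<in> F \<Longrightarrow> b \<in> F \<Longrightarrow> c \<in> F \<Longrightarrow> d \<in> F \<Longrightarrow> a \<oplus> b \<oplus> c \<oplus> d = (a \<oplus> b) \<oplus> (c \<oplus> d)"
  by algebra

definition Lf where "Lf s s' u u' v v' = two \<otimes> rho s \<otimes> (u \<ominus> u') \<oplus> two \<otimes> rho s' \<otimes> (v \<ominus> v')"
definition Cf where "Cf s s' u u' v v' = rho s \<otimes> (u' \<otimes> u' \<ominus> u \<otimes> u) \<oplus> rho s' \<otimes> (v' \<otimes> v' \<ominus> v \<otimes> v)"

lemma psi_prod: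
  assumes s: "s \<in> F" "s \<noteq> \<zero>" and s': "s' \<in> F" "s' \<noteq> \<zero>"
    and pts: "x \<in> F" "u \<in> F" "u' \<in> F" "v \<in> F" "v' \<in> F"
  shows "psi s (x \<ominus> u) * cnj (psi s (x \<ominus> u')) * psi s' (x \<ominus> v) * cnj (psi s' (x \<ominus> v'))
     = e (x \<otimes> Lf s s' u u' v v' \<oplus> Cf s s' u u' v v')"
proof -
  have r: "rho s \<in> F" "rho s' \<in> F" using rho_facts s s' by auto
  have cn: "\<And>y. y \<in> F \<Longrightarrow> cnj (e (\<ominus> y)) = e y" using e_neg by simp
  define X1 where "X1 = rho s \<otimes> (x \<ominus> u) \<otimes> (x \<ominus> u)"
  define X2 where "X2 = rho s \<otimes> (x \<ominus> u') \<otimes> (x \<ominus> u')"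
  define X3 where "X3 = rho s' \<otimes> (x \<ominus> v) \<otimes> (x \<ominus> v)"
  define X4 where "X4 = rho s' \<otimes> (x \<ominus> v') \<otimes> (x \<ominus> v')"
  have X: "X1 \<in> F" "X2 \<in> F" "X3 \<in> F" "X4 \<in> F" unfolding X1_def X2_def X3_def X4_def using r pts by auto
  have "psi s (x \<ominus> u) * cnj (psi s (x \<ominus> u')) * psi s' (x \<ominus> v) * cnj (psi s' (x \<ominus> v'))
      = e (\<ominus> X1) * e X2 * e (\<ominus> X3) * e X4"
    unfolding psi_def X1_def[symmetric] X2_def[symmetric] X3_def[symmetric] X4_def[symmetric] using X cn by simp
  also have "\<dots> = e (\<ominus> X1 \<oplus> X2 \<oplus> \<ominus> X3 \<oplus> X4)" using X by (simp add: e_add)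
  also have "\<ominus> X1 \<oplus> X2 \<oplus> \<ominus> X3 \<oplus> X4 = (\<ominus> X1 \<oplus> X2) \<oplus> (\<ominus> X3 \<oplus> X4)"
    using X by (simp add: comb2)
  also have "\<dots> = x \<otimes> Lf s s' u u' v v' \<oplus> Cf s s' u u' v v'"
    unfolding X1_def X2_def X3_def X4_def Lf_def Cf_def using r pts
    by (simp add: sq_diff comb)
  finally show ?thesis .
qed

lemma Lf_closed: "s \<in> F \<Longrightarrow> s \<noteq> \<zero> \<Longrightarrow> s' \<in> F \<Longrightarrow> s' \<noteq> \<zero> \<Longrightarrow> u \<in> F \<Longrightarrow> u' \<in> F \<Longrightarrow> v \<in> F \<Longrightarrow> v' \<in> F \<Longrightarrow>
   Lf s s' u u' v v' \<in> F \<and> Cf s s' u u' v v' \<in> F"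
  using rho_facts[of s] rho_facts[of s'] unfolding Lf_def Cf_def by simp

lemma pair_sum:
  assumes s: "s \<in> F" "s \<noteq> \<zero>" and s': "s' \<in> F" "s' \<noteq> \<zero>"
    and pts: "u \<in> pts2 R" "u' \<in> pts2 R" "v \<in> pts2 R" "v' \<in> pts2 R"
  shows "(\<Sum>x\<in>pts2 R. Psi s (sub2 R x u) * cnj (Psi s (sub2 R x u')) * Psi s' (sub2 R x v) * cnj (Psi s' (sub2 R x v')))
    = (if Lf s s' (fst u) (fst u') (fst v) (fst v') = \<zero> \<and> Lf s s' (snd u) (snd u') (snd v) (snd v') = \<zero>
       then (complex_of_real q)^2 * e (Cf s s' (fst u) (fst u') (fst v) (fst v') \<oplus> Cf s s' (snd u) (snd u') (snd v) (snd v'))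
       else 0)"
proof -
  have m: "fst u \<in> F" "snd u \<in> F" "fst u' \<in> F" "snd u' \<in> F" "fst v \<in> F" "snd v \<in> F" "fst v' \<in> F" "snd v' \<in> F"
    using pts pts2_mem by auto
  let ?L1 = "Lf s s' (fst u) (fst u') (fst v) (fst v')" and ?L2 = "Lf s s' (snd u) (snd u') (snd v) (snd v')"
  let ?C1 = "Cf s s' (fst u) (fst u') (fst v) (fst v')" and ?C2 = "Cf s s' (snd u) (snd u') (snd v) (snd v')"
  have LC: "?L1 \<in> F" "?L2 \<in> F" "?C1 \<in> F" "?C2 \<in> F" using Lf_closed[OF s s'] m by auto
  have "(\<Sum>x\<in>pts2 R. Psi s (sub2 R x u) * cnj (Psi s (sub2 R x u')) * Psi s' (sub2 R x v) * cnj (Psi s' (sub2 R x v')))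
     = (\<Sum>x\<in>pts2 R. e (fst x \<otimes> ?L1 \<oplus> ?C1) * e (snd x \<otimes> ?L2 \<oplus> ?C2))"
  proof (rule sum.cong[OF refl])
    fix x assume x: "x \<in> pts2 R"
    have mx: "fst x \<in> F" "snd x \<in> F" using x pts2_mem by auto
    have "Psi s (sub2 R x u) * cnj (Psi s (sub2 R x u')) * Psi s' (sub2 R x v) * cnj (Psi s' (sub2 R x v'))
      = (psi s (fst x \<ominus> fst u) * cnj (psi s (fst x \<ominus> fst u')) * psi s' (fst x \<ominus> fst v) * cnj (psi s' (fst x \<ominus> fst v')))
      * (psi s (snd x \<ominus> snd u) * cnj (psi s (snd x \<ominus> snd u')) * psi s' (snd x \<ominus> snd v) * cnj (psi s' (snd x \<ominus> snd v')))"
      unfolding Psi_def sub2_def by (simp add: mult_ac)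
    also have "\<dots> = e (fst x \<otimes> ?L1 \<oplus> ?C1) * e (snd x \<otimes> ?L2 \<oplus> ?C2)"
      using psi_prod[OF s s'] m mx by simp
    finally show "Psi s (sub2 R x u) * cnj (Psi s (sub2 R x u')) * Psi s' (sub2 R x v) * cnj (Psi s' (sub2 R x v'))
       = e (fst x \<otimes> ?L1 \<oplus> ?C1) * e (snd x \<otimes> ?L2 \<oplus> ?C2)" .
  qed
  also have "\<dots> = (\<Sum>a\<in>F. e (a \<otimes> ?L1 \<oplus> ?C1)) * (\<Sum>b\<in>F. e (b \<otimes> ?L2 \<oplus> ?C2))"
    by (rule sum_pts2)
  also have "\<dots> = (if ?L1 = \<zero> \<and> ?L2 = \<zero> then (complex_of_real q)^2 * e (?C1 \<oplus> ?C2) else 0)"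
    unfolding lin_sum[OF LC(1,3)] lin_sum[OF LC(2,4)] using LC by (simp add: e_add power2_eq_square)
  finally show ?thesis .
qed


lemma cK_norm: "s \<in> F \<Longrightarrow> s \<noteq> \<zero> \<Longrightarrow> cmod (cK s) ^ 2 = 1 / q ^ 2"
proof -
  assume s: "s \<in> F" "s \<noteq> \<zero>"
  have "cmod (cK s) = cmod (G s) ^ 2 / q ^ 2" unfolding cK_def using q_pos by (simp add: norm_divide norm_power)
  also have "\<dots> = 1 / q" using G_norm[OF s] q_pos by (simp add: power2_eq_square)
  finally show ?thesis by (simp add: power_divide)
qed

lemma W_bound: assumes "\<And>u. cmod (a u) \<le> 2" "\<And>v. cmod (b v) \<le> 2" shows "cmod (W a b Q) \<le> 16"
proof -
  have "cmod (W a b Q) = cmod (a (q1 Q)) * cmod (a (q2 Q)) * cmod (b (q3 Q)) * cmod (b (q4 Q))"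
    unfolding W_def by (simp add: norm_mult)
  also have "\<dots> \<le> 2 * 2 * 2 * 2" using assms by (intro mult_mono) auto
  finally show ?thesis by simp
qed

definition condL where "condL s s' Q \<longleftrightarrow>
  Lf s s' (fst (q1 Q)) (fst (q2 Q)) (fst (q3 Q)) (fst (q4 Q)) = \<zero> \<and> Lf s s' (snd (q1 Q)) (snd (q2 Q)) (snd (q3 Q)) (snd (q4 Q)) = \<zero>"

definition Cq where "Cq s s' Q =
  Cf s s' (fst (q1 Q)) (fst (q2 Q)) (fst (q3 Q)) (fst (q4 Q)) \<oplus> Cf s s' (snd (q1 Q)) (snd (q2 Q)) (snd (q3 Q)) (snd (q4 Q))"

definition Pq where "Pq s s' x Q = Psi s (sub2 R x (q1 Q)) * cnj (Psi s (sub2 R x (q2 Q))) * Psi s' (sub2 R x (q3 Q)) * cnj (Psi s' (sub2 R x (q4 Q)))"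

lemma quad_mem: "Q \<in> A \<times> A \<times> B \<times> B \<Longrightarrow> q1 Q \<in> A \<and> q2 Q \<in> A \<and> q3 Q \<in> B \<and> q4 Q \<in> B"
  unfolding q1_def q2_def q3_def q4_def by auto

lemma fourier_quad:
  assumes s: "s \<in> F" "s \<noteq> \<zero>" and s': "s' \<in> F" "s' \<noteq> \<zero>"
    and A: "A \<subseteq> pts2 R" and B: "B \<subseteq> pts2 R"
  shows "(\<Sum>x\<in>pts2 R. complex_of_real (cmod (\<Sum>u\<in>A. a u * Psi s (sub2 R x u)) ^ 2 * cmod (\<Sum>v\<in>B. b v * Psi s' (sub2 R x v)) ^ 2))
     = (\<Sum>Q\<in>A \<times> A \<times> B \<times> B. W a b Q * (if condL s s' Q then (complex_of_real q)^2 * e (Cq s s' Q) else 0))"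
proof -
  have "(\<Sum>x\<in>pts2 R. complex_of_real (cmod (\<Sum>u\<in>A. a u * Psi s (sub2 R x u)) ^ 2 * cmod (\<Sum>v\<in>B. b v * Psi s' (sub2 R x v)) ^ 2))
     = (\<Sum>x\<in>pts2 R. \<Sum>Q\<in>A \<times> A \<times> B \<times> B. W a b Q * Pq s s' x Q)"
  proof (rule sum.cong[OF refl])
    fix x
    have "complex_of_real (cmod (\<Sum>u\<in>A. a u * Psi s (sub2 R x u)) ^ 2 * cmod (\<Sum>v\<in>B. b v * Psi s' (sub2 R x v)) ^ 2)
      = (\<Sum>u\<in>A. a u * Psi s (sub2 R x u)) * cnj (\<Sum>u\<in>A. a u * Psi s (sub2 R x u)) *
        ((\<Sum>v\<in>B. b v * Psi s' (sub2 R x v)) * cnj (\<Sum>v\<in>B. b v * Psi s' (sub2 R x v)))"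
      by (simp only: of_real_mult complex_norm_square)
    also have "\<dots> = (\<Sum>Q\<in>A \<times> A \<times> B \<times> B. W a b Q * Pq s s' x Q)"
      unfolding Pq_def by (rule quad_expand)
    finally show "complex_of_real (cmod (\<Sum>u\<in>A. a u * Psi s (sub2 R x u)) ^ 2 * cmod (\<Sum>v\<in>B. b v * Psi s' (sub2 R x v)) ^ 2)
      = (\<Sum>Q\<in>A \<times> A \<times> B \<times> B. W a b Q * Pq s s' x Q)" .
  qed
  also have "\<dots> = (\<Sum>Q\<in>A \<times> A \<times> B \<times> B. \<Sum>x\<in>pts2 R. W a b Q * Pq s s' x Q)"
    by (rule sum.swap)
  also have "\<dots> = (\<Sum>Q\<in>A \<times> A \<times> B \<times> B. W a b Q * (if condL s s' Q then (complex_of_real q)^2 * e (Cq s s' Q) else 0))"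
  proof (rule sum.cong[OF refl])
    fix Q assume Q: "Q \<in> A \<times> A \<times> B \<times> B"
    have m: "q1 Q \<in> pts2 R" "q2 Q \<in> pts2 R" "q3 Q \<in> pts2 R" "q4 Q \<in> pts2 R" using quad_mem[OF Q] A B by auto
    show "(\<Sum>x\<in>pts2 R. W a b Q * Pq s s' x Q) = W a b Q * (if condL s s' Q then (complex_of_real q)^2 * e (Cq s s' Q) else 0)"
      unfolding sum_distrib_left[symmetric] Pq_def condL_def Cq_def pair_sum[OF s s' m] ..
  qed
  finally show ?thesis .
qed

lemma Cq_closed: "s \<in> F \<Longrightarrow> s \<noteq> \<zero> \<Longrightarrow> s' \<in> F \<Longrightarrow> s' \<noteq> \<zero> \<Longrightarrow> q1 Q \<in> pts2 R \<Longrightarrow> q2 Q \<in> pts2 R \<Longrightarrow> q3 Q \<in> pts2 R \<Longrightarrow> q4 Q \<in> pts2 R \<Longrightarrow> Cq s s' Q \<in> F"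
  unfolding Cq_def using Lf_closed pts2_mem by simp

lemma bound1_w:
  assumes s: "s \<in> F" "s \<noteq> \<zero>" and s': "s' \<in> F" "s' \<noteq> \<zero>"
    and A: "A \<subseteq> pts2 R" and B: "B \<subseteq> pts2 R"
    and ab: "\<And>u. cmod (a u) \<le> 2" "\<And>v. cmod (b v) \<le> 2"
  shows "(\<Sum>x\<in>pts2 R. cmod (\<Sum>u\<in>A. a u * Psi s (sub2 R x u)) ^ 2 * cmod (\<Sum>v\<in>B. b v * Psi s' (sub2 R x v)) ^ 2)
     \<le> 16 * q ^ 2 * (\<Sum>Q\<in>A \<times> A \<times> B \<times> B. if condL s s' Q then 1 else 0)"
proof -
  let ?X = "(\<Sum>x\<in>pts2 R. cmod (\<Sum>u\<in>A. a u * Psi s (sub2 R x u)) ^ 2 * cmod (\<Sum>v\<in>B. b v * Psi s' (sub2 R x v)) ^ 2)"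
  have nn: "?X \<ge> 0" by (intro sum_nonneg) simp
  have "?X = cmod (complex_of_real ?X)" unfolding norm_of_real using nn by simp
  also have "complex_of_real ?X = (\<Sum>Q\<in>A \<times> A \<times> B \<times> B. W a b Q * (if condL s s' Q then (complex_of_real q)^2 * e (Cq s s' Q) else 0))"
    unfolding fourier_quad[OF s s' A B, symmetric] by simp
  also have "cmod \<dots> \<le> (\<Sum>Q\<in>A \<times> A \<times> B \<times> B. cmod (W a b Q * (if condL s s' Q then (complex_of_real q)^2 * e (Cq s s' Q) else 0)))"
    by (rule norm_sum)
  also have "\<dots> \<le> (\<Sum>Q\<in>A \<times> A \<times> B \<times> B. 16 * q ^ 2 * (if condL s s' Q then 1 else 0))"
  proof (rule sum_mono)
    fix Q assume Q: "Q \<in> A \<times> A \<times> B \<times> B"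
    have m: "q1 Q \<in> pts2 R" "q2 Q \<in> pts2 R" "q3 Q \<in> pts2 R" "q4 Q \<in> pts2 R" using quad_mem[OF Q] A B by auto
    have ce: "cmod (e (Cq s s' Q)) = 1" using e_norm Cq_closed[OF s s' m] by simp
    have "cmod (W a b Q * (if condL s s' Q then (complex_of_real q)^2 * e (Cq s s' Q) else 0))
       = cmod (W a b Q) * (if condL s s' Q then q^2 else 0)" using ce q_pos by (simp add: norm_mult norm_power)
    also have "\<dots> \<le> 16 * (if condL s s' Q then q^2 else 0)" using W_bound[OF ab] q_pos by (intro mult_right_mono) auto
    also have "\<dots> = 16 * q ^ 2 * (if condL s s' Q then 1 else 0)" by simp
    finally show "cmod (W a b Q * (if condL s s' Q then (complex_of_real q)^2 * e (Cq s s' Q) else 0)) \<le> 16 * q ^ 2 * (if condL s s' Q then 1 else 0)" .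
  qed
  also have "\<dots> = 16 * q ^ 2 * (\<Sum>Q\<in>A \<times> A \<times> B \<times> B. if condL s s' Q then 1 else 0)"
    by (simp add: sum_distrib_left)
  finally show ?thesis .
qed

lemma Lf_zero:
  assumes s: "s \<in> F" "s \<noteq> \<zero>" and s': "s' \<in> F" "s' \<noteq> \<zero>" and m: "u \<in> F" "u' \<in> F" "v \<in> F" "v' \<in> F"
    and L: "Lf s s' u u' v v' = \<zero>"
  shows "s' \<otimes> (u \<ominus> u') \<oplus> s \<otimes> (v \<ominus> v') = \<zero>"
proof -
  have r: "rho s \<in> F" "four \<otimes> s \<otimes> rho s = \<one>" "rho s' \<in> F" "four \<otimes> s' \<otimes> rho s' = \<one>"
    using rho_facts[OF s] rho_facts[OF s'] by auto
  have "two \<otimes> s \<otimes> s' \<otimes> Lf s s' u u' v v' = (four \<otimes> s \<otimes> rho s) \<otimes> (s' \<otimes> (u \<ominus> u')) \<oplus> (four \<otimes> s' \<otimes> rho s') \<otimes> (s \<otimes> (v \<ominus> v'))"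
    unfolding Lf_def four_def using r(1,3) s(1) s'(1) m two_closed by algebra
  thus ?thesis using L r s s' m by simp
qed


lemma add_eq0: "X \<in> F \<Longrightarrow> Y \<in> F \<Longrightarrow> X \<oplus> Y = \<zero> \<Longrightarrow> X = \<ominus> Y"
proof -
  assume XY: "X \<in> F" "Y \<in> F" "X \<oplus> Y = \<zero>"
  have "X = (X \<oplus> Y) \<ominus> Y" using XY(1,2) by algebra
  thus ?thesis using XY by (simp add: minus_eq)
qed

lemma coord_unique:
  assumes m: "w0 \<in> F" "w1 \<in> F" "z \<in> F" "z' \<in> F" "Dl \<in> F" "D \<in> F" and nz: "Dl \<noteq> \<zero>" "z \<noteq> z'"
    and h0: "(w0 \<ominus> z') \<otimes> Dl \<oplus> (w0 \<ominus> z) \<otimes> D = \<zero>"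
    and h1: "(w1 \<ominus> z') \<otimes> Dl \<oplus> (w1 \<ominus> z) \<otimes> D = \<zero>"
  shows "w1 = w0"
proof (rule ccontr)
  assume ne: "w1 \<noteq> w0"
  have "((w1 \<ominus> z') \<otimes> Dl \<oplus> (w1 \<ominus> z) \<otimes> D) \<ominus> ((w0 \<ominus> z') \<otimes> Dl \<oplus> (w0 \<ominus> z) \<otimes> D) = (w1 \<ominus> w0) \<otimes> (Dl \<oplus> D)"
    using m by algebra
  hence "(w1 \<ominus> w0) \<otimes> (Dl \<oplus> D) = \<zero>" using h0 h1 by (simp add: minus_eq)
  hence "Dl \<oplus> D = \<zero>" using ne m diff0[of w1 w0] integral_iff by auto
  hence D: "D = \<ominus> Dl" using add_eq0[of D Dl] m by (simp add: a_comm)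
  have "(w0 \<ominus> z') \<otimes> Dl \<oplus> (w0 \<ominus> z) \<otimes> (\<ominus> Dl) = (z \<ominus> z') \<otimes> Dl" using m by algebra
  hence "(z \<ominus> z') \<otimes> Dl = \<zero>" using h0 D by simp
  thus False using nz m diff0[of z z'] integral_iff by auto
qed

lemma coord_trap:
  assumes m: "s \<in> F" "s' \<in> F" "Dl \<in> F" "D \<in> F" and nz: "s' \<noteq> \<zero>"
    and h: "s' \<otimes> Dl \<oplus> s \<otimes> D = \<zero>"
  shows "Dl = (\<ominus> (s \<otimes> inv s')) \<otimes> D"
proof -
  note I = inv_facts[OF m(2) nz]
  have e1: "s' \<otimes> Dl = \<ominus> (s \<otimes> D)" using add_eq0 h m by simp
  have "Dl = inv s' \<otimes> (s' \<otimes> Dl)" using I m by (simp add: m_assoc[symmetric])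
  also have "\<dots> = inv s' \<otimes> (\<ominus> (s \<otimes> D))" using e1 by simp
  also have "\<dots> = (\<ominus> (s \<otimes> inv s')) \<otimes> D" using I m by algebra
  finally show ?thesis .
qed

definition wc where "wc z z' w Q \<longleftrightarrow>
   (w \<ominus> z') \<otimes> (fst (q1 Q) \<ominus> fst (q2 Q)) \<oplus> (w \<ominus> z) \<otimes> (fst (q3 Q) \<ominus> fst (q4 Q)) = \<zero> \<and>
   (w \<ominus> z') \<otimes> (snd (q1 Q) \<ominus> snd (q2 Q)) \<oplus> (w \<ominus> z) \<otimes> (snd (q3 Q) \<ominus> snd (q4 Q)) = \<zero>"

lemma condL_wc:
  assumes m: "w \<in> F" "z \<in> F" "z' \<in> F" and nz: "w \<noteq> z" "w \<noteq> z'"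
    and Q: "q1 Q \<in> pts2 R" "q2 Q \<in> pts2 R" "q3 Q \<in> pts2 R" "q4 Q \<in> pts2 R"
    and c: "condL (w \<ominus> z) (w \<ominus> z') Q"
  shows "wc z z' w Q"
proof -
  have s: "w \<ominus> z \<in> F" "w \<ominus> z \<noteq> \<zero>" "w \<ominus> z' \<in> F" "w \<ominus> z' \<noteq> \<zero>" using m nz diff0 by auto
  show ?thesis using c unfolding condL_def wc_def
    using Lf_zero[OF s(1,2) s(3,4)] Q pts2_mem by meson
qed

lemma sum_ind: "finite S \<Longrightarrow> (\<Sum>w\<in>S. if P w then (1::real) else 0) = real (card {w\<in>S. P w})"
  by (simp add: sum.If_cases Int_def)

lemma count_Q:
  assumes z: "z \<in> F" "z' \<in> F" "z \<noteq> z'"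
    and Q: "q1 Q \<in> pts2 R" "q2 Q \<in> pts2 R" "q3 Q \<in> pts2 R" "q4 Q \<in> pts2 R"
  shows "(\<Sum>w\<in>F - {z, z'}. if wc z z' w Q then 1 else 0)
     \<le> q * (if q1 Q = q2 Q \<and> q3 Q = q4 Q then 1 else 0) + (if is_trapezoid R (q1 Q) (q2 Q) (q3 Q) (q4 Q) then 1 else 0)"
proof -
  have mQ: "fst (q1 Q) \<in> F" "snd (q1 Q) \<in> F" "fst (q2 Q) \<in> F" "snd (q2 Q) \<in> F"
     "fst (q3 Q) \<in> F" "snd (q3 Q) \<in> F" "fst (q4 Q) \<in> F" "snd (q4 Q) \<in> F" using Q pts2_mem by auto
  have finW: "finite (F - {z, z'})" using fin by simp
  let ?S = "{w \<in> F - {z, z'}. wc z z' w Q}"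
  have sumS: "(\<Sum>w\<in>F - {z, z'}. if wc z z' w Q then 1 else 0) = real (card ?S)" by (rule sum_ind[OF finW])
  have rhs_nn: "0 \<le> q * (if q1 Q = q2 Q \<and> q3 Q = q4 Q then 1 else 0) + (if is_trapezoid R (q1 Q) (q2 Q) (q3 Q) (q4 Q) then 1 else 0)"
    using q_pos by simp
  show ?thesis
  proof (cases "q1 Q = q2 Q")
    case True
    show ?thesis
    proof (cases "q3 Q = q4 Q")
      case True2: True
      have "card ?S \<le> card F" using fin by (intro card_mono) auto
      hence "real (card ?S) \<le> q" unfolding q_def by simp
      moreover have "q \<le> q * (if q1 Q = q2 Q \<and> q3 Q = q4 Q then 1 else 0) + (if is_trapezoid R (q1 Q) (q2 Q) (q3 Q) (q4 Q) then 1 else 0)"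
        using True True2 by simp
      ultimately show ?thesis using sumS by linarith
    next
      case False
      have "?S = {}"
      proof (rule ccontr)
        assume "?S \<noteq> {}"
        then obtain w where w: "w \<in> F" "w \<noteq> z" "w \<noteq> z'" "wc z z' w Q" by blast
        have s: "w \<ominus> z \<in> F" "w \<ominus> z \<noteq> \<zero>" "w \<ominus> z' \<in> F" using w z diff0 by auto
        have d0: "fst (q1 Q) \<ominus> fst (q2 Q) = \<zero>" "snd (q1 Q) \<ominus> snd (q2 Q) = \<zero>" using True mQ diff0 by auto
        have "(w \<ominus> z) \<otimes> (fst (q3 Q) \<ominus> fst (q4 Q)) = \<zero>" "(w \<ominus> z) \<otimes> (snd (q3 Q) \<ominus> snd (q4 Q)) = \<zero>"
          using w(4) d0 s mQ unfolding wc_def by auto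
        hence "fst (q3 Q) \<ominus> fst (q4 Q) = \<zero>" "snd (q3 Q) \<ominus> snd (q4 Q) = \<zero>" using s mQ integral_iff by auto
        hence "fst (q3 Q) = fst (q4 Q)" "snd (q3 Q) = snd (q4 Q)" using mQ diff0 by auto
        thus False using False by (simp add: prod_eq_iff)
      qed
      hence "real (card ?S) = 0" by (metis card.empty of_nat_0)
      thus ?thesis using sumS rhs_nn by linarith
    qed
  next
    case False
    show ?thesis
    proof (cases "?S = {}")
      case True
      hence "real (card ?S) = 0" by (metis card.empty of_nat_0)
      thus ?thesis using sumS rhs_nn by linarith
    next
      case False2: False
      then obtain w0 where w0: "w0 \<in> F" "w0 \<noteq> z" "w0 \<noteq> z'" "wc z z' w0 Q" by blast
      have s0: "w0 \<ominus> z \<in> F" "w0 \<ominus> z' \<in> F" "w0 \<ominus> z' \<noteq> \<zero>" using w0 z diff0 by auto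
      have trap: "is_trapezoid R (q1 Q) (q2 Q) (q3 Q) (q4 Q)"
        unfolding is_trapezoid_def
      proof (rule bexI[of _ "\<ominus> ((w0 \<ominus> z) \<otimes> inv (w0 \<ominus> z'))"])
        show "\<ominus> ((w0 \<ominus> z) \<otimes> inv (w0 \<ominus> z')) \<in> F" using s0 inv_facts by simp
        show "sub2 R (q1 Q) (q2 Q) = smult2 R (\<ominus> ((w0 \<ominus> z) \<otimes> inv (w0 \<ominus> z'))) (sub2 R (q3 Q) (q4 Q))"
          unfolding sub2_def smult2_def using coord_trap[OF s0(1,2) _ _ s0(3)] w0(4) mQ unfolding wc_def by simp
      qed
      have "?S \<subseteq> {w0}"
      proof
        fix w1 assume "w1 \<in> ?S"
        hence w1: "w1 \<in> F" "wc z z' w1 Q" by auto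
        have "fst (q1 Q) \<ominus> fst (q2 Q) \<noteq> \<zero> \<or> snd (q1 Q) \<ominus> snd (q2 Q) \<noteq> \<zero>"
          using False mQ diff0 by (auto simp: prod_eq_iff)
        hence "w1 = w0"
        proof
          assume "fst (q1 Q) \<ominus> fst (q2 Q) \<noteq> \<zero>"
          thus ?thesis using coord_unique[of w0 w1 z z' "fst (q1 Q) \<ominus> fst (q2 Q)" "fst (q3 Q) \<ominus> fst (q4 Q)"] w0 w1 z mQ
            unfolding wc_def by simp
        next
          assume "snd (q1 Q) \<ominus> snd (q2 Q) \<noteq> \<zero>"
          thus ?thesis using coord_unique[of w0 w1 z z' "snd (q1 Q) \<ominus> snd (q2 Q)" "snd (q3 Q) \<ominus> snd (q4 Q)"] w0 w1 z mQ
            unfolding wc_def by simp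
        qed
        thus "w1 \<in> {w0}" by simp
      qed
      hence "card ?S \<le> 1" using card_mono[of "{w0}" ?S] by simp
      hence "real (card ?S) \<le> 1" by simp
      moreover have "1 \<le> q * (if q1 Q = q2 Q \<and> q3 Q = q4 Q then 1 else 0) + (if is_trapezoid R (q1 Q) (q2 Q) (q3 Q) (q4 Q) then 1 else 0)"
        using trap q_pos by simp
      ultimately show ?thesis using sumS by linarith
    qed
  qed
qed


lemma card_diag: assumes "finite A" "finite B"
  shows "card {Q \<in> A \<times> A \<times> B \<times> B. q1 Q = q2 Q \<and> q3 Q = q4 Q} = card A * card B"
proof -
  have "{Q \<in> A \<times> A \<times> B \<times> B. q1 Q = q2 Q \<and> q3 Q = q4 Q} = (\<lambda>p. (fst p, fst p, snd p, snd p)) ` (A \<times> B)"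
    unfolding q1_def q2_def q3_def q4_def by force
  moreover have "inj_on (\<lambda>p. (fst p, fst p, snd p, snd p)) (A \<times> B)" by (rule inj_onI) (simp add: prod_eq_iff)
  ultimately show ?thesis by (simp add: card_image card_cartesian_product)
qed

lemma trap_card: "num_trap R A B = card {Q \<in> A \<times> A \<times> B \<times> B. is_trapezoid R (q1 Q) (q2 Q) (q3 Q) (q4 Q)}"
proof -
  have "{(x1, x2, x3, x4). x1 \<in> A \<and> x2 \<in> A \<and> x3 \<in> B \<and> x4 \<in> B \<and> is_trapezoid R x1 x2 x3 x4}
     = {Q \<in> A \<times> A \<times> B \<times> B. is_trapezoid R (q1 Q) (q2 Q) (q3 Q) (q4 Q)}"
    unfolding q1_def q2_def q3_def q4_def by auto
  thus ?thesis unfolding num_trap_def by simp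
qed

lemma plane_A:
  assumes sup: "supported_on_plane R g z" and sim: "sim_one_on_support g"
  shows "slice_set R g z \<subseteq> pts2 R" "finite (slice_set R g z)" "\<And>u. cmod (g (u, z)) \<le> 2"
proof -
  show S: "slice_set R g z \<subseteq> pts2 R" unfolding slice_set_def by auto
  show "finite (slice_set R g z)" using finite_subset[OF S pts2_fin] .
  fix u
  have "g (u, z) \<noteq> 0 \<longrightarrow> 1/2 \<le> cmod (g (u, z)) \<and> cmod (g (u, z)) \<le> 2"
    using sim unfolding sim_one_on_support_def by blast
  thus "cmod (g (u, z)) \<le> 2" by (cases "g (u, z) = 0") auto
qed

lemma L2_split: "L2sq R (\<lambda>x. f x * h x) = (\<Sum>w\<in>F. \<Sum>x\<in>pts2 R. cmod (f (x, w)) ^ 2 * cmod (h (x, w)) ^ 2)"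
proof -
  have "L2sq R (\<lambda>x. f x * h x) = (\<Sum>p\<in>pts2 R \<times> F. cmod (f p) ^ 2 * cmod (h p) ^ 2)"
    unfolding L2sq_def pts3_eq by (simp add: norm_mult power_mult_distrib)
  also have "\<dots> = (\<Sum>(x, w)\<in>pts2 R \<times> F. cmod (f (x, w)) ^ 2 * cmod (h (x, w)) ^ 2)"
    by (simp add: split_def)
  also have "\<dots> = (\<Sum>x\<in>pts2 R. \<Sum>w\<in>F. cmod (f (x, w)) ^ 2 * cmod (h (x, w)) ^ 2)"
    by (rule sum.cartesian_product[symmetric])
  also have "\<dots> = (\<Sum>w\<in>F. \<Sum>x\<in>pts2 R. cmod (f (x, w)) ^ 2 * cmod (h (x, w)) ^ 2)"
    by (rule sum.swap)
  finally show ?thesis .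
qed

lemma bound1:
  assumes z: "z \<in> F" "z' \<in> F" "z \<noteq> z'"
    and sup: "supported_on_plane R g z" "supported_on_plane R g' z'"
    and sim: "sim_one_on_support g" "sim_one_on_support g'"
  shows "L2sq R (\<lambda>x. conv3 R g (kernK R e) x * conv3 R g' (kernK R e) x)
     \<le> 16 / q ^ 2 * (q * real (card (slice_set R g z)) * real (card (slice_set R g' z')) + real (num_trap R (slice_set R g z) (slice_set R g' z')))"
proof -
  define A where "A = slice_set R g z"
  define B where "B = slice_set R g' z'"
  note pA = plane_A[OF sup(1) sim(1), folded A_def]
  note pB = plane_A[OF sup(2) sim(2), folded B_def]
  let ?f = "conv3 R g (kernK R e)" and ?h = "conv3 R g' (kernK R e)"
  let ?T = "\<lambda>w. (\<Sum>x\<in>pts2 R. cmod (?f (x, w)) ^ 2 * cmod (?h (x, w)) ^ 2)"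
  let ?N = "\<lambda>w. (\<Sum>Q\<in>A \<times> A \<times> B \<times> B. if wc z z' w Q then (1::real) else 0)"
  have finQ: "finite (A \<times> A \<times> B \<times> B)" using pA pB by simp
  have "L2sq R (\<lambda>x. ?f x * ?h x) = (\<Sum>w\<in>F. ?T w)" by (rule L2_split)
  also have "\<dots> = (\<Sum>w\<in>F - {z, z'}. ?T w)"
  proof (rule sum.mono_neutral_right[OF fin], blast, rule ballI)
    fix w assume "w \<in> F - (F - {z, z'})"
    hence "w = z \<or> w = z'" by auto
    thus "?T w = 0"
    proof
      assume "w = z"
      hence "\<And>x. x \<in> pts2 R \<Longrightarrow> ?f (x, w) = 0" using conv_formula[OF sup(1) z(1)] z by simp
      thus ?thesis by simp
    next
      assume "w = z'"
      hence "\<And>x. x \<in> pts2 R \<Longrightarrow> ?h (x, w) = 0" using conv_formula[OF sup(2) z(2)] z by simp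
      thus ?thesis by simp
    qed
  qed
  also have "\<dots> \<le> (\<Sum>w\<in>F - {z, z'}. 16 / q ^ 2 * ?N w)"
  proof (rule sum_mono)
    fix w assume w: "w \<in> F - {z, z'}"
    define s where "s = w \<ominus> z"
    define s' where "s' = w \<ominus> z'"
    have s: "s \<in> F" "s \<noteq> \<zero>" "s' \<in> F" "s' \<noteq> \<zero>" using w z diff0 unfolding s_def s'_def by auto
    have "?T w = (\<Sum>x\<in>pts2 R. (cmod (cK s) ^ 2 * cmod (cK s') ^ 2) *
          (cmod (\<Sum>u\<in>A. g (u, z) * Psi s (sub2 R x u)) ^ 2 * cmod (\<Sum>v\<in>B. g' (v, z') * Psi s' (sub2 R x v)) ^ 2))"
    proof (rule sum.cong[OF refl])
      fix x assume x: "x \<in> pts2 R"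
      have "?f (x, w) = cK s * (\<Sum>u\<in>A. g (u, z) * Psi s (sub2 R x u))"
        using conv_formula[OF sup(1) z(1) x] w unfolding A_def s_def by simp
      moreover have "?h (x, w) = cK s' * (\<Sum>v\<in>B. g' (v, z') * Psi s' (sub2 R x v))"
        using conv_formula[OF sup(2) z(2) x] w unfolding B_def s'_def by simp
      ultimately show "cmod (?f (x, w)) ^ 2 * cmod (?h (x, w)) ^ 2 = (cmod (cK s) ^ 2 * cmod (cK s') ^ 2) *
          (cmod (\<Sum>u\<in>A. g (u, z) * Psi s (sub2 R x u)) ^ 2 * cmod (\<Sum>v\<in>B. g' (v, z') * Psi s' (sub2 R x v)) ^ 2)"
        by (simp add: norm_mult power_mult_distrib)
    qed
    also have "\<dots> = (1 / q ^ 4) * (\<Sum>x\<in>pts2 R. cmod (\<Sum>u\<in>A. g (u, z) * Psi s (sub2 R x u)) ^ 2 * cmod (\<Sum>v\<in>B. g' (v, z') * Psi s' (sub2 R x v)) ^ 2)"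
      unfolding sum_distrib_left[symmetric] cK_norm[OF s(1,2)] cK_norm[OF s(3,4)] by (simp add: power_def)
    also have "\<dots> \<le> (1 / q ^ 4) * (16 * q ^ 2 * (\<Sum>Q\<in>A \<times> A \<times> B \<times> B. if condL s s' Q then 1 else 0))"
      using bound1_w[OF s pA(1) pB(1), of "\<lambda>u. g (u, z)" "\<lambda>v. g' (v, z')"] pA(3) pB(3) q_pos
      by (intro mult_left_mono) auto
    also have "\<dots> \<le> (1 / q ^ 4) * (16 * q ^ 2 * ?N w)"
    proof -
      have "(\<Sum>Q\<in>A \<times> A \<times> B \<times> B. if condL s s' Q then 1 else 0) \<le> ?N w"
      proof (rule sum_mono)
        fix Q assume Q: "Q \<in> A \<times> A \<times> B \<times> B"
        have m: "q1 Q \<in> pts2 R" "q2 Q \<in> pts2 R" "q3 Q \<in> pts2 R" "q4 Q \<in> pts2 R" using quad_mem[OF Q] pA(1) pB(1) by auto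
        have "condL s s' Q \<Longrightarrow> wc z z' w Q" using condL_wc[of w z z' Q] w z m unfolding s_def s'_def by auto
        thus "(if condL s s' Q then 1 else 0) \<le> (if wc z z' w Q then (1::real) else 0)" by auto
      qed
      thus ?thesis using q_pos by (intro mult_left_mono) auto
    qed
    also have "\<dots> = 16 / q ^ 2 * ?N w" using q_pos by (simp add: power_def field_simps)
    finally show "?T w \<le> 16 / q ^ 2 * ?N w" .
  qed
  also have "\<dots> = 16 / q ^ 2 * (\<Sum>w\<in>F - {z, z'}. ?N w)"
    by (rule sum_distrib_left[symmetric])
  also have "\<dots> = 16 / q ^ 2 * (\<Sum>Q\<in>A \<times> A \<times> B \<times> B. \<Sum>w\<in>F - {z, z'}. if wc z z' w Q then 1 else 0)"
    by (subst sum.swap) (rule refl)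
  also have "\<dots> \<le> 16 / q ^ 2 * (\<Sum>Q\<in>A \<times> A \<times> B \<times> B. q * (if q1 Q = q2 Q \<and> q3 Q = q4 Q then 1 else 0) + (if is_trapezoid R (q1 Q) (q2 Q) (q3 Q) (q4 Q) then 1 else 0))"
  proof (intro mult_left_mono sum_mono)
    fix Q assume Q: "Q \<in> A \<times> A \<times> B \<times> B"
    have m: "q1 Q \<in> pts2 R" "q2 Q \<in> pts2 R" "q3 Q \<in> pts2 R" "q4 Q \<in> pts2 R" using quad_mem[OF Q] pA(1) pB(1) by auto
    show "(\<Sum>w\<in>F - {z, z'}. if wc z z' w Q then 1 else 0) \<le> q * (if q1 Q = q2 Q \<and> q3 Q = q4 Q then 1 else 0) + (if is_trapezoid R (q1 Q) (q2 Q) (q3 Q) (q4 Q) then 1 else 0)"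
      by (rule count_Q[OF z m])
  qed (use q_pos in simp)
  also have "(\<Sum>Q\<in>A \<times> A \<times> B \<times> B. q * (if q1 Q = q2 Q \<and> q3 Q = q4 Q then 1 else 0) + (if is_trapezoid R (q1 Q) (q2 Q) (q3 Q) (q4 Q) then 1 else 0))
     = q * real (card A) * real (card B) + real (num_trap R A B)"
    unfolding sum.distrib sum_distrib_left[symmetric] sum_ind[OF finQ] card_diag[OF pA(2) pB(2)] trap_card by simp
  finally show ?thesis unfolding A_def B_def .
qed


lemma rho_rho: "t \<in> F \<Longrightarrow> t \<noteq> \<zero> \<Longrightarrow> rho (rho t) = t"
proof -
  assume t: "t \<in> F" "t \<noteq> \<zero>"
  note r = rho_facts[OF t]
  have rF: "rho t \<in> F" and r1: "four \<otimes> t \<otimes> rho t = \<one>" using r by auto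
  have "four \<otimes> rho t \<otimes> t = four \<otimes> t \<otimes> rho t" using rF t four_closed by algebra
  hence "four \<otimes> rho t \<otimes> t = \<one>" using r1 by simp
  thus ?thesis unfolding rho_def[of "rho t"] using comm_inv_char[of "four \<otimes> rho t" t] r t by simp
qed

lemma sum_rho: assumes z: "z \<in> F" and c: "c \<in> F"
  shows "(\<Sum>w\<in>F - {z}. e (rho (w \<ominus> z) \<otimes> c)) = (if c = \<zero> then complex_of_real q else 0) - 1"
proof -
  have "(\<Sum>w\<in>F - {z}. e (rho (w \<ominus> z) \<otimes> c)) = (\<Sum>t\<in>F - {\<zero>}. e (t \<otimes> c))"
  proof (rule sum.reindex_bij_witness[of _ "\<lambda>t. rho t \<oplus> z" "\<lambda>w. rho (w \<ominus> z)"])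
    fix w assume w: "w \<in> F - {z}"
    have s: "w \<ominus> z \<in> F" "w \<ominus> z \<noteq> \<zero>" using w z diff0 by auto
    have wF: "w \<in> F" using w by simp
    have "(w \<ominus> z) \<oplus> z = w" using wF z by algebra
    thus "rho (rho (w \<ominus> z)) \<oplus> z = w" using rho_rho[OF s] by simp
    show "rho (w \<ominus> z) \<in> F - {\<zero>}" using rho_facts[OF s] by simp
    show "e (rho (w \<ominus> z) \<otimes> c) = e (rho (w \<ominus> z) \<otimes> c)" ..
  next
    fix t assume t: "t \<in> F - {\<zero>}"
    have r: "rho t \<in> F" "rho t \<noteq> \<zero>" using rho_facts t by auto
    have "rho t \<oplus> z \<ominus> z = rho t" using r z by algebra
    thus "rho (rho t \<oplus> z \<ominus> z) = t" using rho_rho t by simp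
    have "rho t \<oplus> z \<noteq> z"
    proof
      assume "rho t \<oplus> z = z"
      hence "rho t = \<zero>" using r z by simp
      thus False using r by simp
    qed
    thus "rho t \<oplus> z \<in> F - {z}" using r z by simp
  qed
  also have "\<dots> = (\<Sum>t\<in>F. e (t \<otimes> c)) - e (\<zero> \<otimes> c)"
    using sum.remove[OF fin zero_closed, of "\<lambda>t. e (t \<otimes> c)"] by simp
  also have "\<dots> = (if c = \<zero> then complex_of_real q else 0) - 1"
    using orth1[OF c] c by (simp add: m_comm e_zero)
  finally show ?thesis .
qed

definition Vq where "Vq Q = ((fst (q1 Q) \<ominus> fst (q2 Q)) \<oplus> (fst (q3 Q) \<ominus> fst (q4 Q)),
                           (snd (q1 Q) \<ominus> snd (q2 Q)) \<oplus> (snd (q3 Q) \<ominus> snd (q4 Q)))"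
definition cc where "cc Q = ((fst (q2 Q) \<otimes> fst (q2 Q) \<ominus> fst (q1 Q) \<otimes> fst (q1 Q)) \<oplus> (fst (q4 Q) \<otimes> fst (q4 Q) \<ominus> fst (q3 Q) \<otimes> fst (q3 Q)))
   \<oplus> ((snd (q2 Q) \<otimes> snd (q2 Q) \<ominus> snd (q1 Q) \<otimes> snd (q1 Q)) \<oplus> (snd (q4 Q) \<otimes> snd (q4 Q) \<ominus> snd (q3 Q) \<otimes> snd (q3 Q)))"

lemma condL_same:
  assumes s: "s \<in> F" "s \<noteq> \<zero>" and Q: "q1 Q \<in> pts2 R" "q2 Q \<in> pts2 R" "q3 Q \<in> pts2 R" "q4 Q \<in> pts2 R"
  shows "condL s s Q \<longleftrightarrow> Vq Q = (\<zero>, \<zero>)" and "Cq s s Q = rho s \<otimes> cc Q"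
proof -
  have m: "fst (q1 Q) \<in> F" "snd (q1 Q) \<in> F" "fst (q2 Q) \<in> F" "snd (q2 Q) \<in> F"
     "fst (q3 Q) \<in> F" "snd (q3 Q) \<in> F" "fst (q4 Q) \<in> F" "snd (q4 Q) \<in> F" using Q pts2_mem by auto
  have r: "rho s \<in> F" "rho s \<noteq> \<zero>" using rho_facts[OF s] by auto
  have tr: "two \<otimes> rho s \<in> F" "two \<otimes> rho s \<noteq> \<zero>" using r prod_ne[of two "rho s"] by auto
  have L: "\<And>u u' v v'. u \<in> F \<Longrightarrow> u' \<in> F \<Longrightarrow> v \<in> F \<Longrightarrow> v' \<in> F \<Longrightarrow>
      Lf s s u u' v v' = (two \<otimes> rho s) \<otimes> ((u \<ominus> u') \<oplus> (v \<ominus> v'))"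
    unfolding Lf_def using r(1) two_closed by algebra
  have L0: "\<And>u u' v v'. u \<in> F \<Longrightarrow> u' \<in> F \<Longrightarrow> v \<in> F \<Longrightarrow> v' \<in> F \<Longrightarrow>
      Lf s s u u' v v' = \<zero> \<longleftrightarrow> (u \<ominus> u') \<oplus> (v \<ominus> v') = \<zero>"
    using L tr integral_iff by simp
  show "condL s s Q \<longleftrightarrow> Vq Q = (\<zero>, \<zero>)" unfolding condL_def Vq_def using L0 m by simp
  have C: "\<And>u u' v v'. u \<in> F \<Longrightarrow> u' \<in> F \<Longrightarrow> v \<in> F \<Longrightarrow> v' \<in> F \<Longrightarrow>
      Cf s s u u' v v' = rho s \<otimes> ((u' \<otimes> u' \<ominus> u \<otimes> u) \<oplus> (v' \<otimes> v' \<ominus> v \<otimes> v))"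
    unfolding Cf_def using r(1) by algebra
  have D: "\<And>X Y. X \<in> F \<Longrightarrow> Y \<in> F \<Longrightarrow> rho s \<otimes> X \<oplus> rho s \<otimes> Y = rho s \<otimes> (X \<oplus> Y)"
    using r(1) by algebra
  show "Cq s s Q = rho s \<otimes> cc Q" unfolding Cq_def cc_def using C m D by simp
qed


lemma cc_closed: "q1 Q \<in> pts2 R \<Longrightarrow> q2 Q \<in> pts2 R \<Longrightarrow> q3 Q \<in> pts2 R \<Longrightarrow> q4 Q \<in> pts2 R \<Longrightarrow> cc Q \<in> F"
  unfolding cc_def using pts2_mem by simp

lemma L4_formula:
  assumes sup: "supported_on_plane R g z" and sim: "sim_one_on_support g" and z: "z \<in> F"
  shows "complex_of_real (L2sq R (\<lambda>x. conv3 R g (kernK R e) x * conv3 R g (kernK R e) x))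
    = (1 / (complex_of_real q) ^ 2) * (complex_of_real q * (\<Sum>Q\<in>slice_set R g z \<times> slice_set R g z \<times> slice_set R g z \<times> slice_set R g z.
          W (\<lambda>u. g (u, z)) (\<lambda>u. g (u, z)) Q * (if Vq Q = (\<zero>, \<zero>) \<and> cc Q = \<zero> then 1 else 0))
       - (\<Sum>Q\<in>slice_set R g z \<times> slice_set R g z \<times> slice_set R g z \<times> slice_set R g z.
          W (\<lambda>u. g (u, z)) (\<lambda>u. g (u, z)) Q * (if Vq Q = (\<zero>, \<zero>) then 1 else 0)))"
proof -
  define A where "A = slice_set R g z"
  define a where "a = (\<lambda>u. g (u, z))"
  note pA = plane_A[OF sup sim, folded A_def]
  let ?f = "conv3 R g (kernK R e)"
  let ?T = "\<lambda>w. (\<Sum>x\<in>pts2 R. cmod (?f (x, w)) ^ 2 * cmod (?f (x, w)) ^ 2)"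
  let ?QS = "A \<times> A \<times> A \<times> A"
  have qn: "complex_of_real q \<noteq> 0" using q_pos by simp
  have "L2sq R (\<lambda>x. ?f x * ?f x) = (\<Sum>w\<in>F. ?T w)" by (rule L2_split)
  also have "\<dots> = (\<Sum>w\<in>F - {z}. ?T w)"
  proof (rule sum.mono_neutral_right[OF fin], blast, rule ballI)
    fix w assume "w \<in> F - (F - {z})"
    hence "w = z" by auto
    hence "\<And>x. x \<in> pts2 R \<Longrightarrow> ?f (x, w) = 0" using conv_formula[OF sup z] z by simp
    thus "?T w = 0" by simp
  qed
  finally have L: "complex_of_real (L2sq R (\<lambda>x. ?f x * ?f x)) = (\<Sum>w\<in>F - {z}. complex_of_real (?T w))" by simp
  have Tw: "complex_of_real (?T w) = (1 / (complex_of_real q) ^ 2) *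
      (\<Sum>Q\<in>?QS. W a a Q * (if Vq Q = (\<zero>, \<zero>) then e (rho (w \<ominus> z) \<otimes> cc Q) else 0))"
    if w: "w \<in> F - {z}" for w
  proof -
    define s where "s = w \<ominus> z"
    have s: "s \<in> F" "s \<noteq> \<zero>" using w z diff0 unfolding s_def by auto
    have "?T w = (\<Sum>x\<in>pts2 R. (cmod (cK s) ^ 2 * cmod (cK s) ^ 2) *
          (cmod (\<Sum>u\<in>A. a u * Psi s (sub2 R x u)) ^ 2 * cmod (\<Sum>v\<in>A. a v * Psi s (sub2 R x v)) ^ 2))"
    proof (rule sum.cong[OF refl])
      fix x assume x: "x \<in> pts2 R"
      have "?f (x, w) = cK s * (\<Sum>u\<in>A. a u * Psi s (sub2 R x u))"
        using conv_formula[OF sup z x] w unfolding A_def a_def s_def by simp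
      thus "cmod (?f (x, w)) ^ 2 * cmod (?f (x, w)) ^ 2 = (cmod (cK s) ^ 2 * cmod (cK s) ^ 2) *
          (cmod (\<Sum>u\<in>A. a u * Psi s (sub2 R x u)) ^ 2 * cmod (\<Sum>v\<in>A. a v * Psi s (sub2 R x v)) ^ 2)"
        by (simp only: norm_mult power_mult_distrib mult_ac)
    qed
    also have "\<dots> = (1 / q ^ 4) * (\<Sum>x\<in>pts2 R. cmod (\<Sum>u\<in>A. a u * Psi s (sub2 R x u)) ^ 2 * cmod (\<Sum>v\<in>A. a v * Psi s (sub2 R x v)) ^ 2)"
      unfolding sum_distrib_left[symmetric] cK_norm[OF s] by (simp add: power_def)
    finally have "complex_of_real (?T w) = (1 / (complex_of_real q) ^ 4) *
       (\<Sum>x\<in>pts2 R. complex_of_real (cmod (\<Sum>u\<in>A. a u * Psi s (sub2 R x u)) ^ 2 * cmod (\<Sum>v\<in>A. a v * Psi s (sub2 R x v)) ^ 2))"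
      by simp
    also have "\<dots> = (1 / (complex_of_real q) ^ 4) * (\<Sum>Q\<in>?QS. W a a Q * (if condL s s Q then (complex_of_real q)^2 * e (Cq s s Q) else 0))"
      unfolding fourier_quad[OF s s pA(1) pA(1)] ..
    also have "\<dots> = (1 / (complex_of_real q) ^ 4) * (\<Sum>Q\<in>?QS. (complex_of_real q)^2 * (W a a Q * (if Vq Q = (\<zero>, \<zero>) then e (rho s \<otimes> cc Q) else 0)))"
    proof -
      have "\<And>Q. Q \<in> ?QS \<Longrightarrow> W a a Q * (if condL s s Q then (complex_of_real q)^2 * e (Cq s s Q) else 0)
          = (complex_of_real q)^2 * (W a a Q * (if Vq Q = (\<zero>, \<zero>) then e (rho s \<otimes> cc Q) else 0))"
      proof -
        fix Q assume Q: "Q \<in> ?QS"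
        have m: "q1 Q \<in> pts2 R" "q2 Q \<in> pts2 R" "q3 Q \<in> pts2 R" "q4 Q \<in> pts2 R" using quad_mem[OF Q] pA(1) by auto
        show "W a a Q * (if condL s s Q then (complex_of_real q)^2 * e (Cq s s Q) else 0)
          = (complex_of_real q)^2 * (W a a Q * (if Vq Q = (\<zero>, \<zero>) then e (rho s \<otimes> cc Q) else 0))"
          using condL_same[OF s m] by simp
      qed
      hence "(\<Sum>Q\<in>?QS. W a a Q * (if condL s s Q then (complex_of_real q)^2 * e (Cq s s Q) else 0))
          = (\<Sum>Q\<in>?QS. (complex_of_real q)^2 * (W a a Q * (if Vq Q = (\<zero>, \<zero>) then e (rho s \<otimes> cc Q) else 0)))"
        by (rule sum.cong[OF refl])
      thus ?thesis by (rule arg_cong)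
    qed
    also have "\<dots> = (1 / (complex_of_real q) ^ 2) * (\<Sum>Q\<in>?QS. W a a Q * (if Vq Q = (\<zero>, \<zero>) then e (rho s \<otimes> cc Q) else 0))"
      unfolding sum_distrib_left[symmetric] using qn by (simp add: power_def field_simps)
    finally show ?thesis unfolding s_def .
  qed
  have "(\<Sum>w\<in>F - {z}. complex_of_real (?T w)) = (\<Sum>w\<in>F - {z}. (1 / (complex_of_real q) ^ 2) *
      (\<Sum>Q\<in>?QS. W a a Q * (if Vq Q = (\<zero>, \<zero>) then e (rho (w \<ominus> z) \<otimes> cc Q) else 0)))"
    using Tw by (intro sum.cong refl) simp
  also have "\<dots> = (1 / (complex_of_real q) ^ 2) *
      (\<Sum>Q\<in>?QS. \<Sum>w\<in>F - {z}. W a a Q * (if Vq Q = (\<zero>, \<zero>) then e (rho (w \<ominus> z) \<otimes> cc Q) else 0))"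
    by (subst sum_distrib_left[symmetric]) (subst sum.swap, rule refl)
  also have "(\<Sum>Q\<in>?QS. \<Sum>w\<in>F - {z}. W a a Q * (if Vq Q = (\<zero>, \<zero>) then e (rho (w \<ominus> z) \<otimes> cc Q) else 0))
     = (\<Sum>Q\<in>?QS. complex_of_real q * (W a a Q * (if Vq Q = (\<zero>, \<zero>) \<and> cc Q = \<zero> then 1 else 0))
           - W a a Q * (if Vq Q = (\<zero>, \<zero>) then 1 else 0))"
  proof (rule sum.cong[OF refl])
    fix Q assume Q: "Q \<in> ?QS"
    have m: "q1 Q \<in> pts2 R" "q2 Q \<in> pts2 R" "q3 Q \<in> pts2 R" "q4 Q \<in> pts2 R" using quad_mem[OF Q] pA(1) by auto
    have "(\<Sum>w\<in>F - {z}. W a a Q * (if Vq Q = (\<zero>, \<zero>) then e (rho (w \<ominus> z) \<otimes> cc Q) else 0))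
       = W a a Q * (if Vq Q = (\<zero>, \<zero>) then (\<Sum>w\<in>F - {z}. e (rho (w \<ominus> z) \<otimes> cc Q)) else 0)"
      by (simp add: sum_distrib_left[symmetric])
    also have "\<dots> = W a a Q * (if Vq Q = (\<zero>, \<zero>) then (if cc Q = \<zero> then complex_of_real q else 0) - 1 else 0)"
      using sum_rho[OF z cc_closed[OF m]] by simp
    also have "\<dots> = complex_of_real q * (W a a Q * (if Vq Q = (\<zero>, \<zero>) \<and> cc Q = \<zero> then 1 else 0))
           - W a a Q * (if Vq Q = (\<zero>, \<zero>) then 1 else 0)"
      by (simp add: algebra_simps)
    finally show "(\<Sum>w\<in>F - {z}. W a a Q * (if Vq Q = (\<zero>, \<zero>) then e (rho (w \<ominus> z) \<otimes> cc Q) else 0))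
       = complex_of_real q * (W a a Q * (if Vq Q = (\<zero>, \<zero>) \<and> cc Q = \<zero> then 1 else 0))
           - W a a Q * (if Vq Q = (\<zero>, \<zero>) then 1 else 0)" .
  qed
  also have "\<dots> = complex_of_real q * (\<Sum>Q\<in>?QS. W a a Q * (if Vq Q = (\<zero>, \<zero>) \<and> cc Q = \<zero> then 1 else 0))
       - (\<Sum>Q\<in>?QS. W a a Q * (if Vq Q = (\<zero>, \<zero>) then 1 else 0))"
    by (simp add: sum_subtractf sum_distrib_left)
  finally show ?thesis using L unfolding A_def a_def by simp
qed


lemma lin4: "a \<in> F \<Longrightarrow> b \<in> F \<Longrightarrow> u1 \<in> F \<Longrightarrow> u2 \<in> F \<Longrightarrow> u3 \<in> F \<Longrightarrow> u4 \<in> F \<Longrightarrow>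
   w1 \<in> F \<Longrightarrow> w2 \<in> F \<Longrightarrow> w3 \<in> F \<Longrightarrow> w4 \<in> F \<Longrightarrow>
   (a \<otimes> u1 \<oplus> b \<otimes> w1) \<oplus> \<ominus> (a \<otimes> u2 \<oplus> b \<otimes> w2) \<oplus> (a \<otimes> u3 \<oplus> b \<otimes> w3) \<oplus> \<ominus> (a \<otimes> u4 \<oplus> b \<otimes> w4)
   = ((u1 \<ominus> u2) \<oplus> (u3 \<ominus> u4)) \<otimes> a \<oplus> ((w1 \<ominus> w2) \<oplus> (w3 \<ominus> w4)) \<otimes> b"
  by algebra

definition ch where "ch \<xi> u = e (fst \<xi> \<otimes> fst u \<oplus> snd \<xi> \<otimes> snd u)"

lemma ch_prod:
  assumes "\<xi> \<in> pts2 R" "q1 Q \<in> pts2 R" "q2 Q \<in> pts2 R" "q3 Q \<in> pts2 R" "q4 Q \<in> pts2 R"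
  shows "ch \<xi> (q1 Q) * cnj (ch \<xi> (q2 Q)) * ch \<xi> (q3 Q) * cnj (ch \<xi> (q4 Q))
      = e (fst (Vq Q) \<otimes> fst \<xi>) * e (snd (Vq Q) \<otimes> snd \<xi>)"
proof -
  have m: "fst \<xi> \<in> F" "snd \<xi> \<in> F" "fst (q1 Q) \<in> F" "snd (q1 Q) \<in> F" "fst (q2 Q) \<in> F" "snd (q2 Q) \<in> F"
     "fst (q3 Q) \<in> F" "snd (q3 Q) \<in> F" "fst (q4 Q) \<in> F" "snd (q4 Q) \<in> F" using assms pts2_mem by auto
  have "ch \<xi> (q1 Q) * cnj (ch \<xi> (q2 Q)) * ch \<xi> (q3 Q) * cnj (ch \<xi> (q4 Q))
     = e ((fst \<xi> \<otimes> fst (q1 Q) \<oplus> snd \<xi> \<otimes> snd (q1 Q)) \<oplus> \<ominus> (fst \<xi> \<otimes> fst (q2 Q) \<oplus> snd \<xi> \<otimes> snd (q2 Q))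
       \<oplus> (fst \<xi> \<otimes> fst (q3 Q) \<oplus> snd \<xi> \<otimes> snd (q3 Q)) \<oplus> \<ominus> (fst \<xi> \<otimes> fst (q4 Q) \<oplus> snd \<xi> \<otimes> snd (q4 Q)))"
    unfolding ch_def using m by (simp add: e_add e_neg)
  also have "\<dots> = e (fst (Vq Q) \<otimes> fst \<xi> \<oplus> snd (Vq Q) \<otimes> snd \<xi>)"
    unfolding Vq_def using lin4 m by simp
  also have "\<dots> = e (fst (Vq Q) \<otimes> fst \<xi>) * e (snd (Vq Q) \<otimes> snd \<xi>)"
    unfolding Vq_def using m by (simp add: e_add)
  finally show ?thesis .
qed

lemma Y_real:
  assumes A: "A \<subseteq> pts2 R"
  shows "(\<Sum>Q\<in>A \<times> A \<times> A \<times> A. W a a Q * (if Vq Q = (\<zero>, \<zero>) then 1 else 0))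
     = complex_of_real ((1 / q ^ 2) * (\<Sum>\<xi>\<in>pts2 R. cmod (\<Sum>u\<in>A. a u * ch \<xi> u) ^ 2 * cmod (\<Sum>u\<in>A. a u * ch \<xi> u) ^ 2))"
proof -
  let ?QS = "A \<times> A \<times> A \<times> A"
  have qn: "complex_of_real q \<noteq> 0" using q_pos by simp
  have "complex_of_real (\<Sum>\<xi>\<in>pts2 R. cmod (\<Sum>u\<in>A. a u * ch \<xi> u) ^ 2 * cmod (\<Sum>u\<in>A. a u * ch \<xi> u) ^ 2)
     = (\<Sum>\<xi>\<in>pts2 R. \<Sum>Q\<in>?QS. W a a Q * (ch \<xi> (q1 Q) * cnj (ch \<xi> (q2 Q)) * ch \<xi> (q3 Q) * cnj (ch \<xi> (q4 Q))))"
  proof -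
    have "\<And>\<xi>. complex_of_real (cmod (\<Sum>u\<in>A. a u * ch \<xi> u) ^ 2 * cmod (\<Sum>u\<in>A. a u * ch \<xi> u) ^ 2)
       = (\<Sum>Q\<in>?QS. W a a Q * (ch \<xi> (q1 Q) * cnj (ch \<xi> (q2 Q)) * ch \<xi> (q3 Q) * cnj (ch \<xi> (q4 Q))))"
      by (simp only: of_real_mult complex_norm_square quad_expand)
    thus ?thesis by simp
  qed
  also have "\<dots> = (\<Sum>Q\<in>?QS. \<Sum>\<xi>\<in>pts2 R. W a a Q * (ch \<xi> (q1 Q) * cnj (ch \<xi> (q2 Q)) * ch \<xi> (q3 Q) * cnj (ch \<xi> (q4 Q))))"
    by (rule sum.swap)
  also have "\<dots> = (\<Sum>Q\<in>?QS. (complex_of_real q)^2 * (W a a Q * (if Vq Q = (\<zero>, \<zero>) then 1 else 0)))"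
  proof (rule sum.cong[OF refl])
    fix Q assume Q: "Q \<in> ?QS"
    have m: "q1 Q \<in> pts2 R" "q2 Q \<in> pts2 R" "q3 Q \<in> pts2 R" "q4 Q \<in> pts2 R" using quad_mem[OF Q] A by auto
    have V: "fst (Vq Q) \<in> F" "snd (Vq Q) \<in> F" unfolding Vq_def using m pts2_mem by auto
    have "(\<Sum>\<xi>\<in>pts2 R. W a a Q * (ch \<xi> (q1 Q) * cnj (ch \<xi> (q2 Q)) * ch \<xi> (q3 Q) * cnj (ch \<xi> (q4 Q))))
       = W a a Q * (\<Sum>\<xi>\<in>pts2 R. e (fst (Vq Q) \<otimes> fst \<xi>) * e (snd (Vq Q) \<otimes> snd \<xi>))"
      unfolding sum_distrib_left using ch_prod m by (intro sum.cong refl) auto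
    also have "\<dots> = W a a Q * ((\<Sum>x\<in>F. e (fst (Vq Q) \<otimes> x)) * (\<Sum>y\<in>F. e (snd (Vq Q) \<otimes> y)))"
      using sum_pts2[of "\<lambda>x. e (fst (Vq Q) \<otimes> x)" "\<lambda>y. e (snd (Vq Q) \<otimes> y)"] by simp
    also have "\<dots> = (complex_of_real q)^2 * (W a a Q * (if Vq Q = (\<zero>, \<zero>) then 1 else 0))"
      unfolding orth1[OF V(1)] orth1[OF V(2)] by (cases "Vq Q") (simp add: power2_eq_square)
    finally show "(\<Sum>\<xi>\<in>pts2 R. W a a Q * (ch \<xi> (q1 Q) * cnj (ch \<xi> (q2 Q)) * ch \<xi> (q3 Q) * cnj (ch \<xi> (q4 Q))))
       = (complex_of_real q)^2 * (W a a Q * (if Vq Q = (\<zero>, \<zero>) then 1 else 0))" .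
  qed
  also have "\<dots> = (complex_of_real q)^2 * (\<Sum>Q\<in>?QS. W a a Q * (if Vq Q = (\<zero>, \<zero>) then 1 else 0))"
    by (rule sum_distrib_left[symmetric])
  finally show ?thesis using qn by (simp add: field_simps)
qed


lemma solve4: "a \<in> F \<Longrightarrow> b \<in> F \<Longrightarrow> c \<in> F \<Longrightarrow> d \<in> F \<Longrightarrow> (a \<ominus> b) \<oplus> (c \<ominus> d) = \<zero> \<Longrightarrow> d = a \<ominus> b \<oplus> c"
proof -
  assume m: "a \<in> F" "b \<in> F" "c \<in> F" "d \<in> F" and h: "(a \<ominus> b) \<oplus> (c \<ominus> d) = \<zero>"
  have "a \<ominus> b \<oplus> c = ((a \<ominus> b) \<oplus> (c \<ominus> d)) \<oplus> d" using m by algebra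
  thus ?thesis using h m by simp
qed

lemma rid1: "a1 \<in> F \<Longrightarrow> a2 \<in> F \<Longrightarrow> a3 \<in> F \<Longrightarrow>
  (a2 \<otimes> a2 \<ominus> a1 \<otimes> a1) \<oplus> ((a1 \<ominus> a2 \<oplus> a3) \<otimes> (a1 \<ominus> a2 \<oplus> a3) \<ominus> a3 \<otimes> a3) = \<ominus> (two \<otimes> ((a2 \<ominus> a1) \<otimes> (a3 \<ominus> a2)))"
  unfolding two_def by algebra
lemma rid2: "a1 \<in> F \<Longrightarrow> a2 \<in> F \<Longrightarrow> a3 \<in> F \<Longrightarrow> (a1 \<ominus> a2 \<oplus> a3) \<ominus> a3 = \<ominus> (a2 \<ominus> a1)"
  by algebra
lemma rid3: "a1 \<in> F \<Longrightarrow> a2 \<in> F \<Longrightarrow> a3 \<in> F \<Longrightarrow> a1 \<ominus> (a1 \<ominus> a2 \<oplus> a3) = \<ominus> (a3 \<ominus> a2)"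
  by algebra
lemma rid4: "P \<in> F \<Longrightarrow> Q \<in> F \<Longrightarrow> \<ominus> (two \<otimes> P) \<oplus> \<ominus> (two \<otimes> Q) = \<ominus> (two \<otimes> (P \<oplus> Q))"
  using two_closed by algebra
lemma rid5: "p \<in> F \<Longrightarrow> r \<in> F \<Longrightarrow> p' \<in> F \<Longrightarrow> r' \<in> F \<Longrightarrow>
   r \<otimes> (\<ominus> p) \<oplus> r' \<otimes> (\<ominus> p') = \<ominus> (p \<otimes> r \<oplus> p' \<otimes> r') \<and>
   (\<ominus> p) \<otimes> (\<ominus> r) \<oplus> (\<ominus> p') \<otimes> (\<ominus> r') = p \<otimes> r \<oplus> p' \<otimes> r' \<and>
   (\<ominus> r) \<otimes> p \<oplus> (\<ominus> r') \<otimes> p' = \<ominus> (p \<otimes> r \<oplus> p' \<otimes> r')"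
  by (intro conjI; algebra)

lemma rect_of:
  assumes u: "u1 \<in> pts2 R" "u2 \<in> pts2 R" "u3 \<in> pts2 R" "u4 \<in> pts2 R"
    and V: "Vq (u1, u2, u3, u4) = (\<zero>, \<zero>)" and c: "cc (u1, u2, u3, u4) = \<zero>"
  shows "is_rectangle R u1 u2 u3 u4"
proof -
  obtain a1 b1 where 1: "u1 = (a1, b1)" by (cases u1)
  obtain a2 b2 where 2: "u2 = (a2, b2)" by (cases u2)
  obtain a3 b3 where 3: "u3 = (a3, b3)" by (cases u3)
  obtain a4 b4 where 4: "u4 = (a4, b4)" by (cases u4)
  have m: "a1 \<in> F" "a2 \<in> F" "a3 \<in> F" "a4 \<in> F" "b1 \<in> F" "b2 \<in> F" "b3 \<in> F" "b4 \<in> F"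
    using u unfolding 1 2 3 4 pts2_def by auto
  have "(a1 \<ominus> a2) \<oplus> (a3 \<ominus> a4) = \<zero>" "(b1 \<ominus> b2) \<oplus> (b3 \<ominus> b4) = \<zero>"
    using V unfolding Vq_def q1_def q2_def q3_def q4_def 1 2 3 4 by auto
  hence a4: "a4 = a1 \<ominus> a2 \<oplus> a3" and b4: "b4 = b1 \<ominus> b2 \<oplus> b3"
    using solve4[OF m(1,2,3,4)] solve4[OF m(5,6,7,8)] by auto
  define pa where "pa = a2 \<ominus> a1"
  define ra where "ra = a3 \<ominus> a2"
  define pb where "pb = b2 \<ominus> b1"
  define rb where "rb = b3 \<ominus> b2"
  have pr: "pa \<in> F" "ra \<in> F" "pb \<in> F" "rb \<in> F" unfolding pa_def ra_def pb_def rb_def using m by auto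
  define X where "X = pa \<otimes> ra \<oplus> pb \<otimes> rb"
  have XF: "X \<in> F" unfolding X_def using pr by simp
  have cc0: "((a2 \<otimes> a2 \<ominus> a1 \<otimes> a1) \<oplus> (a4 \<otimes> a4 \<ominus> a3 \<otimes> a3)) \<oplus> ((b2 \<otimes> b2 \<ominus> b1 \<otimes> b1) \<oplus> (b4 \<otimes> b4 \<ominus> b3 \<otimes> b3)) = \<zero>"
    using c unfolding cc_def q1_def q2_def q3_def q4_def 1 2 3 4 by simp
  hence "\<ominus> (two \<otimes> (pa \<otimes> ra)) \<oplus> \<ominus> (two \<otimes> (pb \<otimes> rb)) = \<zero>"
    unfolding a4 b4 pa_def ra_def pb_def rb_def using rid1[OF m(1,2,3)] rid1[OF m(5,6,7)] by simp
  hence "\<ominus> (two \<otimes> X) = \<zero>" unfolding X_def using rid4 pr by simp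
  hence "\<ominus> (\<ominus> (two \<otimes> X)) = \<zero>" by simp
  hence "two \<otimes> X = \<zero>" using XF two_closed by (simp only: minus_minus m_closed)
  hence X0: "X = \<zero>" using XF integral_iff[of two X] by simp
  have d1: "a4 \<ominus> a3 = \<ominus> pa" "b4 \<ominus> b3 = \<ominus> pb" unfolding a4 b4 pa_def pb_def using rid2[OF m(1,2,3)] rid2[OF m(5,6,7)] by auto
  have d2: "a1 \<ominus> a4 = \<ominus> ra" "b1 \<ominus> b4 = \<ominus> rb" unfolding a4 b4 ra_def rb_def using rid3[OF m(1,2,3)] rid3[OF m(5,6,7)] by auto
  have c1: "(a2 \<ominus> a1) \<otimes> (a3 \<ominus> a2) \<oplus> (b2 \<ominus> b1) \<otimes> (b3 \<ominus> b2) = \<zero>" using X0 unfolding X_def pa_def ra_def pb_def rb_def .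
  have c2: "(a3 \<ominus> a2) \<otimes> (a4 \<ominus> a3) \<oplus> (b3 \<ominus> b2) \<otimes> (b4 \<ominus> b3) = \<zero>"
    unfolding d1 ra_def[symmetric] rb_def[symmetric] using rid5[OF pr(1,2,3,4)] X0 unfolding X_def by simp
  have c3: "(a4 \<ominus> a3) \<otimes> (a1 \<ominus> a4) \<oplus> (b4 \<ominus> b3) \<otimes> (b1 \<ominus> b4) = \<zero>"
    unfolding d1 d2 using rid5[OF pr(1,2,3,4)] X0 unfolding X_def by simp
  have c4: "(a1 \<ominus> a4) \<otimes> (a2 \<ominus> a1) \<oplus> (b1 \<ominus> b4) \<otimes> (b2 \<ominus> b1) = \<zero>"
    unfolding d2 pa_def[symmetric] pb_def[symmetric] using rid5[OF pr(1,2,3,4)] X0 unfolding X_def by simp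
  show ?thesis unfolding is_rectangle_def is_corner_def dot2_def sub2_def 1 2 3 4 using c1 c2 c3 c4 by simp
qed

lemma rect_card: "num_rect R A = card {Q \<in> A \<times> A \<times> A \<times> A. is_rectangle R (q1 Q) (q2 Q) (q3 Q) (q4 Q)}"
proof -
  have "{(x0, x1, x2, x3). x0 \<in> A \<and> x1 \<in> A \<and> x2 \<in> A \<and> x3 \<in> A \<and> is_rectangle R x0 x1 x2 x3}
     = {Q \<in> A \<times> A \<times> A \<times> A. is_rectangle R (q1 Q) (q2 Q) (q3 Q) (q4 Q)}"
    unfolding q1_def q2_def q3_def q4_def by auto
  thus ?thesis unfolding num_rect_def by simp
qed


lemma quad_tuple: "Q = (q1 Q, q2 Q, q3 Q, q4 Q)"
  unfolding q1_def q2_def q3_def q4_def by simp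

lemma rect_count:
  assumes A: "A \<subseteq> pts2 R" "finite A"
  shows "card {Q \<in> A \<times> A \<times> A \<times> A. Vq Q = (\<zero>, \<zero>) \<and> cc Q = \<zero>} \<le> num_rect R A"
  unfolding rect_card
proof (rule card_mono)
  show "finite {Q \<in> A \<times> A \<times> A \<times> A. is_rectangle R (q1 Q) (q2 Q) (q3 Q) (q4 Q)}" using A by simp
  show "{Q \<in> A \<times> A \<times> A \<times> A. Vq Q = (\<zero>, \<zero>) \<and> cc Q = \<zero>} \<subseteq> {Q \<in> A \<times> A \<times> A \<times> A. is_rectangle R (q1 Q) (q2 Q) (q3 Q) (q4 Q)}"
  proof
    fix Q assume Q: "Q \<in> {Q \<in> A \<times> A \<times> A \<times> A. Vq Q = (\<zero>, \<zero>) \<and> cc Q = \<zero>}"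
    hence QA: "Q \<in> A \<times> A \<times> A \<times> A" and V: "Vq Q = (\<zero>, \<zero>)" and c: "cc Q = \<zero>" by auto
    have m: "q1 Q \<in> pts2 R" "q2 Q \<in> pts2 R" "q3 Q \<in> pts2 R" "q4 Q \<in> pts2 R" using quad_mem[OF QA] A by auto
    have "is_rectangle R (q1 Q) (q2 Q) (q3 Q) (q4 Q)"
      using rect_of[OF m] V c quad_tuple[of Q] by simp
    thus "Q \<in> {Q \<in> A \<times> A \<times> A \<times> A. is_rectangle R (q1 Q) (q2 Q) (q3 Q) (q4 Q)}" using QA by simp
  qed
qed

lemma L4_bound:
  assumes sup: "supported_on_plane R g z" and sim: "sim_one_on_support g" and z: "z \<in> F"
  shows "L2sq R (\<lambda>x. conv3 R g (kernK R e) x * conv3 R g (kernK R e) x) \<le> 16 / q * real (num_rect R (slice_set R g z))"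
proof -
  define A where "A = slice_set R g z"
  define a where "a = (\<lambda>u. g (u, z))"
  note pA = plane_A[OF sup sim, folded A_def]
  let ?QS = "A \<times> A \<times> A \<times> A"
  define L where "L = L2sq R (\<lambda>x. conv3 R g (kernK R e) x * conv3 R g (kernK R e) x)"
  define X where "X = (\<Sum>Q\<in>?QS. W a a Q * (if Vq Q = (\<zero>, \<zero>) \<and> cc Q = \<zero> then 1 else 0))"
  define y where "y = (1 / q ^ 2) * (\<Sum>\<xi>\<in>pts2 R. cmod (\<Sum>u\<in>A. a u * ch \<xi> u) ^ 2 * cmod (\<Sum>u\<in>A. a u * ch \<xi> u) ^ 2)"
  have y0: "y \<ge> 0" unfolding y_def using q_pos by (intro mult_nonneg_nonneg sum_nonneg) auto
  have Lc: "complex_of_real L = (1 / (complex_of_real q) ^ 2) * (complex_of_real q * X - complex_of_real y)"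
    unfolding L_def X_def y_def using L4_formula[OF sup sim z] Y_real[OF pA(1), of a] unfolding A_def a_def by simp
  have qn: "q \<noteq> 0" using q_pos by simp
  have "complex_of_real L = X * complex_of_real (1 / q) - complex_of_real (y / q ^ 2)"
    unfolding Lc using qn by (simp add: field_simps power2_eq_square)
  hence "L = Re (X * complex_of_real (1 / q)) - y / q ^ 2"
    by (metis Re_complex_of_real minus_complex.simps(1))
  also have "\<dots> = Re X / q - y / q ^ 2" by simp
  also have "\<dots> \<le> cmod X / q" using y0 q_pos complex_Re_le_cmod[of X]
    by (smt (verit) divide_right_mono zero_le_divide_iff zero_less_power)
  also have "cmod X \<le> 16 * real (card {Q \<in> ?QS. Vq Q = (\<zero>, \<zero>) \<and> cc Q = \<zero>})"
  proof -
    have "cmod X \<le> (\<Sum>Q\<in>?QS. cmod (W a a Q * (if Vq Q = (\<zero>, \<zero>) \<and> cc Q = \<zero> then 1 else 0)))"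
      unfolding X_def by (rule norm_sum)
    also have "\<dots> \<le> (\<Sum>Q\<in>?QS. 16 * (if Vq Q = (\<zero>, \<zero>) \<and> cc Q = \<zero> then 1 else 0))"
    proof (rule sum_mono)
      fix Q
      have "cmod (W a a Q) \<le> 16" using W_bound[of a a Q] pA(3) unfolding a_def by simp
      thus "cmod (W a a Q * (if Vq Q = (\<zero>, \<zero>) \<and> cc Q = \<zero> then 1 else 0)) \<le> 16 * (if Vq Q = (\<zero>, \<zero>) \<and> cc Q = \<zero> then 1 else 0)"
        by simp
    qed
    also have "\<dots> = 16 * real (card {Q \<in> ?QS. Vq Q = (\<zero>, \<zero>) \<and> cc Q = \<zero>})"
      unfolding sum_distrib_left[symmetric] using sum_ind[of ?QS] pA(2) by simp
    finally show ?thesis .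
  qed
  hence "cmod X / q \<le> 16 * real (card {Q \<in> ?QS. Vq Q = (\<zero>, \<zero>) \<and> cc Q = \<zero>}) / q"
    using q_pos by (simp add: divide_right_mono)
  also have "\<dots> \<le> 16 * real (num_rect R A) / q"
    using rect_count[OF pA(1,2)] q_pos by (simp add: divide_right_mono)
  finally show ?thesis unfolding L_def A_def by simp
qed


lemma bound2:
  assumes z: "z \<in> F" "z' \<in> F"
    and sup: "supported_on_plane R g z" "supported_on_plane R g' z'"
    and sim: "sim_one_on_support g" "sim_one_on_support g'"
  shows "L2sq R (\<lambda>x. conv3 R g (kernK R e) x * conv3 R g' (kernK R e) x)
     \<le> 16 / q * sqrt (real (num_rect R (slice_set R g z)) * real (num_rect R (slice_set R g' z')))"
proof -
  let ?f = "conv3 R g (kernK R e)" and ?h = "conv3 R g' (kernK R e)"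
  define RA where "RA = real (num_rect R (slice_set R g z))"
  define RB where "RB = real (num_rect R (slice_set R g' z'))"
  have b1: "L2sq R (\<lambda>x. ?f x * ?f x) \<le> 16 / q * RA" using L4_bound[OF sup(1) sim(1) z(1)] unfolding RA_def .
  have b2: "L2sq R (\<lambda>x. ?h x * ?h x) \<le> 16 / q * RB" using L4_bound[OF sup(2) sim(2) z(2)] unfolding RB_def .
  have n1: "L2sq R (\<lambda>x. ?f x * ?f x) \<ge> 0" and n2: "L2sq R (\<lambda>x. ?h x * ?h x) \<ge> 0"
    unfolding L2sq_def by (auto intro: sum_nonneg)
  have "L2sq R (\<lambda>x. ?f x * ?h x) = (\<Sum>x\<in>pts3 R. cmod (?f x) ^ 2 * cmod (?h x) ^ 2)"
    unfolding L2sq_def by (simp add: norm_mult power_mult_distrib)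
  hence "(L2sq R (\<lambda>x. ?f x * ?h x))^2 \<le> (\<Sum>x\<in>pts3 R. (cmod (?f x) ^ 2)^2) * (\<Sum>x\<in>pts3 R. (cmod (?h x) ^ 2)^2)"
    using Cauchy_Schwarz_ineq_sum[of "\<lambda>x. cmod (?f x) ^ 2" "\<lambda>x. cmod (?h x) ^ 2" "pts3 R"] by simp
  also have "\<dots> = L2sq R (\<lambda>x. ?f x * ?f x) * L2sq R (\<lambda>x. ?h x * ?h x)"
    unfolding L2sq_def by (simp add: norm_mult power_mult_distrib power2_eq_square)
  also have "\<dots> \<le> (16 / q * RA) * (16 / q * RB)"
    using b1 b2 n1 n2 by (intro mult_mono) auto
  also have "\<dots> = (16 / q) ^ 2 * (RA * RB)" by (simp add: power2_eq_square)
  finally have "L2sq R (\<lambda>x. ?f x * ?h x) \<le> sqrt ((16 / q) ^ 2 * (RA * RB))" by (rule real_le_rsqrt)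
  also have "\<dots> = 16 / q * sqrt (RA * RB)" using q_pos by (simp add: real_sqrt_mult)
  finally show ?thesis unfolding RA_def RB_def .
qed

lemma main_FF:
  assumes z: "z \<in> F" "z' \<in> F" "z \<noteq> z'"
    and sup: "supported_on_plane R g z" "supported_on_plane R g' z'"
    and sim: "sim_one_on_support g" "sim_one_on_support g'"
  shows "L2sq R (\<lambda>x. conv3 R g (kernK R e) x * conv3 R g' (kernK R e) x)
     \<le> 16 * (real (card (slice_set R g z)) * real (card (slice_set R g' z')) / real (card F)
              + Bquant R (slice_set R g z) (slice_set R g' z') / (real (card F))^2)"
proof -
  let ?L = "L2sq R (\<lambda>x. conv3 R g (kernK R e) x * conv3 R g' (kernK R e) x)"
  define a where "a = real (card (slice_set R g z))"
  define b where "b = real (card (slice_set R g' z'))"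
  define T where "T = real (num_trap R (slice_set R g z) (slice_set R g' z'))"
  define S where "S = q * sqrt (real (num_rect R (slice_set R g z)) * real (num_rect R (slice_set R g' z')))"
  have ab: "a \<ge> 0" "b \<ge> 0" unfolding a_def b_def by auto
  have B: "Bquant R (slice_set R g z) (slice_set R g' z') = min T S" unfolding Bquant_def T_def S_def q_def ..
  have qq: "real (card F) = q" unfolding q_def ..
  have h1: "?L \<le> 16 * (a * b / q + T / q ^ 2)"
    using bound1[OF z sup sim] q_pos unfolding a_def b_def T_def by (simp add: field_simps power2_eq_square)
  have h2: "?L \<le> 16 * (a * b / q + S / q ^ 2)"
  proof -
    have "?L \<le> 16 / q * sqrt (real (num_rect R (slice_set R g z)) * real (num_rect R (slice_set R g' z')))"
      by (rule bound2[OF z(1,2) sup sim])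
    also have "\<dots> = 16 * (S / q ^ 2)" unfolding S_def using q_pos by (simp add: power2_eq_square)
    also have "\<dots> \<le> 16 * (a * b / q + S / q ^ 2)" using ab q_pos by simp
    finally show ?thesis .
  qed
  show ?thesis unfolding B qq a_def[symmetric] b_def[symmetric]
    using h1 h2 by (cases "T \<le> S") (simp_all add: min_def)
qed

end

locale natfield = field R for R :: "nat ring" (structure)

lemma (in natfield) two_from_char:
  assumes "odd (ring_char R)"
  shows "\<one> \<oplus> \<one> \<noteq> \<zero>"
proof
  assume h: "\<one> \<oplus> \<one> = \<zero>"
  have p1: "add_pow R (1::nat) \<one> = \<one>" using add.nat_pow_Suc[of "\<one>" 0] by simp
  have p2: "add_pow R (2::nat) \<one> = \<zero>" using add.nat_pow_Suc[of "\<one>" 1] p1 h by (simp add: numeral_2_eq_2)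
  let ?P = "\<lambda>n::nat. n > 0 \<and> add_pow R n \<one> = \<zero>"
  have P2: "?P 2" using p2 by simp
  have le: "ring_char R \<le> 2" unfolding ring_char_def using Least_le[of ?P 2] P2 by simp
  have Pr: "?P (ring_char R)" unfolding ring_char_def using LeastI[of ?P 2] P2 by simp
  have "ring_char R \<noteq> 1" using Pr p1 by auto
  hence "ring_char R = 2" using le Pr by linarith
  thus False using assms by simp
qed

theorem lemma3p2:
  "\<exists>C::real. \<forall>(R::nat ring) e z z' gz gz'.
     field R \<and> finite (carrier R) \<and> odd (ring_char R) \<and>
     \<not> (\<exists>x\<in>carrier R. x \<otimes>\<^bsub>R\<^esub> x = \<ominus>\<^bsub>R\<^esub> \<one>\<^bsub>R\<^esub>) \<and>
     nontrivial_character R e \<and>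
     z \<in> carrier R \<and> z' \<in> carrier R \<and> z \<noteq> z' \<and>
     supported_on_plane R gz z \<and> supported_on_plane R gz' z' \<and>
     sim_one_on_support gz \<and> sim_one_on_support gz'
     \<longrightarrow>
     L2sq R (\<lambda>x. conv3 R gz (kernK R e) x * conv3 R gz' (kernK R e) x)
       \<le> C * (real (card (slice_set R gz z)) * real (card (slice_set R gz' z'))
                / real (card (carrier R))
              + Bquant R (slice_set R gz z) (slice_set R gz' z') / (real (card (carrier R)))^2)"
proof (intro exI[of _ 16] allI impI)
  fix R :: "nat ring" and e z z' gz gz'
  assume H: "field R \<and> finite (carrier R) \<and> odd (ring_char R) \<and>
     \<not> (\<exists>x\<in>carrier R. x \<otimes>\<^bsub>R\<^esub> x = \<ominus>\<^bsub>R\<^esub> \<one>\<^bsub>R\<^esub>) \<and>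
     nontrivial_character R e \<and>
     z \<in> carrier R \<and> z' \<in> carrier R \<and> z \<noteq> z' \<and>
     supported_on_plane R gz z \<and> supported_on_plane R gz' z' \<and>
     sim_one_on_support gz \<and> sim_one_on_support gz'"
  have "FF R e"
  proof (rule FF.intro)
    show "field R" using H by simp
    show "FF_axioms R e"
      using H natfield.two_from_char[of R] natfield.intro[of R] unfolding nontrivial_character_def by (intro FF_axioms.intro) auto
  qed
  then interpret FF R e .
  show "L2sq R (\<lambda>x. conv3 R gz (kernK R e) x * conv3 R gz' (kernK R e) x)
       \<le> 16 * (real (card (slice_set R gz z)) * real (card (slice_set R gz' z'))
                / real (card (carrier R))
              + Bquant R (slice_set R gz z) (slice_set R gz' z') / (real (card (carrier R)))^2)"
    using main_FF H by blast
qed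

end
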